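(* In the setting described in the context (in particular under assumptions (A1)–(A4) and $2<\phi_N<\phi_D$), with all quantities other than $N$ held fixed, as $N\to\infty$, \[\sqrt N\,(S-\mu(f))\Rightarrow\mathcal N(0,\sigma_S^2)\quad\text{and}\quad \sqrt N\,(S(c_R)-\mu(f))\Rightarrow\mathcal N(0,\sigma_S^2)\] for any $0\le c_R<\phi_N^{-1/2}$, where $\sigma_S^2:=\mathrm{Var}(D_0)+\sum_{l=0}^\infty\frac{\mathrm{Var}(D_{l,l+1})}{c_{l,l+1}}$ and $\Rightarrow$ denotes convergence in distribution.
   Context: Let $f$ be a real-valued measurable function, $\mu(f)\in\mathbb R$, and $(\tilde\mu_{h_l}(f))_{l\ge0}$ real numbers converging to $\mu(f)$. $D_0$, $D_{l,l+1}$ ($l\ge0$) are real random variables. Given positive constants $c_{0,1}\ge c_{1,2}\ge\cdots$ with $c_{l,l+1}\to0$ and $N\ge1$: $L(N)=\min\{l\in\mathbb N:c_{l,l+1}N\le1\}$; $N_{l,l+1}=\lceil c_{l,l+1}N\rceil$ for $l\le L(N)$, and $N_{l,l+1}\sim\mathrm{Bernoulli}(c_{l,l+1}N)$ for $l>L(N)$, independent of everything else. $D_0^{(1)},\dots,D_0^{(N)}$ are i.i.d. copies of $D_0$ independent of everything else, $S_0=\frac1N\sum_rD_0^{(r)}$; $D^{(r)}_{l,l+1}$ ($1\le r\le N_{l,l+1}$) have the law of $D_{l,l+1}$ and $S_{l,l+1}=\frac{1}{\mathbb E(N_{l,l+1})}\sum_{r=1}^{N_{l,l+1}}D^{(r)}_{l,l+1}$.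 $S=S_0+\sum_{l\ge0}S_{l,l+1}$ with $S_0,S_{0,1},S_{1,2},\dots$ independent, and $S(c_R)=S_0+\sum_{l=0}^{L(N)-1}S_{l,l+1}+\frac{D^{(1)}_{L(N),L(N)+1}}{1-c_R}+\sum_{l>L(N)}\frac{\mathbb 1[N_{l,l+1}=1]}{\mathbb E(N_{l,l+1})}[D^{(1)}_{l,l+1}-D^{(1)}_{L(N),L(N)+1}c_R^{l-L(N)}]$, where $\{D^{(1)}_{l,l+1}\}_{l\ge L(N)}$ may be dependent among themselves. Assumptions: (A1) $\mathbb E(D_0)=\tilde\mu_{h_0}(f)$, $\mathrm{Var}(D_0)<\infty$, $\mathbb E(D_{l,l+1})=\tilde\mu_{h_{l+1}}(f)-\tilde\mu_{h_l}(f)$, $\mathbb E(D_{l,l+1}^2)\le V_D\phi_D^{-l}$ with $V_D>0,\phi_D>2$; (A2) $\underline c_N\phi_N^{-l}\le c_{l,l+1}\le\overline c_N\phi_N^{-l}$ with $0<\underline c_N\le\overline c_N$, $\phi_N>2$; (A3) generating a sample of $D_{l,l+1}$ costs at most $C'2^l(K+lB+B_0)$ for finite constants, and a sample of $D_0$ has finite cost; (A4) for $1\le l\le L(N)-1$, $1\le r\le N_{l,l+1}$, the $D^{(r)}_{l,l+1}$ are mutually independent and independent of $\{D^{(1)}_{l,l+1}\}_{l\ge L(N)}$. *)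

theory Defs
  imports "HOL-Probability.Probability"
begin

definition Lvl :: "(nat \<Rightarrow> real) \<Rightarrow> nat \<Rightarrow> nat" where
  "Lvl c N = (LEAST l. c l * real N \<le> 1)"

text \<open>ceiling(c_(l,l+1) N) as a natural number: the (maximal) number of samples on level l.\<close>
definition nsamp :: "(nat \<Rightarrow> real) \<Rightarrow> nat \<Rightarrow> nat \<Rightarrow> nat" where
  "nsamp c N l = nat \<lceil>c l * real N\<rceil>"

definition Var_of :: "'a measure \<Rightarrow> ('a \<Rightarrow> real) \<Rightarrow> real" where
  "Var_of M X = (\<integral>x. (X x - (\<integral>y. X y \<partial>M))\<^sup>2 \<partial>M)"

definition S0_est :: "nat \<Rightarrow> (nat \<Rightarrow> 'a \<Rightarrow> real) \<Rightarrow> 'a \<Rightarrow> real" where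
  "S0_est N X0 \<omega> = (\<Sum>r=1..N. X0 r \<omega>) / real N"

definition Slev :: "'a measure \<Rightarrow> (nat \<Rightarrow> 'a \<Rightarrow> nat) \<Rightarrow> (nat \<Rightarrow> nat \<Rightarrow> 'a \<Rightarrow> real)
    \<Rightarrow> nat \<Rightarrow> 'a \<Rightarrow> real" where
  "Slev M Nr Y l \<omega> = (\<Sum>r=1..Nr l \<omega>. Y l r \<omega>) / (\<integral>x. real (Nr l x) \<partial>M)"

definition S_est :: "'a measure \<Rightarrow> nat \<Rightarrow> (nat \<Rightarrow> 'a \<Rightarrow> real) \<Rightarrow> (nat \<Rightarrow> 'a \<Rightarrow> nat)
    \<Rightarrow> (nat \<Rightarrow> nat \<Rightarrow> 'a \<Rightarrow> real) \<Rightarrow> 'a \<Rightarrow> real" where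
  "S_est M N X0 Nr Y \<omega> = S0_est N X0 \<omega> + (\<Sum>l. Slev M Nr Y l \<omega>)"

definition SR_est :: "'a measure \<Rightarrow> (nat \<Rightarrow> real) \<Rightarrow> nat \<Rightarrow> real \<Rightarrow> (nat \<Rightarrow> 'a \<Rightarrow> real)
    \<Rightarrow> (nat \<Rightarrow> 'a \<Rightarrow> nat) \<Rightarrow> (nat \<Rightarrow> nat \<Rightarrow> 'a \<Rightarrow> real) \<Rightarrow> 'a \<Rightarrow> real" where
  "SR_est M c N cR X0 Nr Y \<omega> =
     (let L = Lvl c N in
       S0_est N X0 \<omega> + (\<Sum>l<L. Slev M Nr Y l \<omega>) + Y L 1 \<omega> / (1 - cR)
       + (\<Sum>l. if L < l then
                 (if Nr l \<omega> = 1 then 1 else 0) / (\<integral>x. real (Nr l x) \<partial>M)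
                   * (Y l 1 \<omega> - Y L 1 \<omega> * cR ^ (l - L))
               else 0))"

definition normal_law :: "real \<Rightarrow> real \<Rightarrow> real measure" where
  "normal_law m v = (if v = 0 then return borel m else density lborel (normal_density m (sqrt v)))"

definition gen :: "'a measure \<Rightarrow> ('a \<Rightarrow> real) \<Rightarrow> 'a set set" where
  "gen M X = {X -` A \<inter> space M | A. A \<in> sets borel}"

text \<open>Independence blocks for S(c_R): each D_0^(r); each N_(l,l+1), l > L(N);
  each D_(l,l+1)^(r), l < L(N); and the whole family {D_(l,l+1)^(1)}_(l \<ge> L(N)).\<close>
datatype blk = B0 nat | BN nat | BY nat nat | BTail

definition blk_index :: "(nat \<Rightarrow> real) \<Rightarrow> nat \<Rightarrow> blk set" where
  "blk_index c N = B0 ` {1..N} \<union> BN ` {l. Lvl c N < l}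
     \<union> {BY l r | l r. l < Lvl c N \<and> r \<in> {1..nsamp c N l}} \<union> {BTail}"

definition blk_sets :: "'a measure \<Rightarrow> (nat \<Rightarrow> real) \<Rightarrow> nat \<Rightarrow> (nat \<Rightarrow> 'a \<Rightarrow> real)
    \<Rightarrow> (nat \<Rightarrow> 'a \<Rightarrow> nat) \<Rightarrow> (nat \<Rightarrow> nat \<Rightarrow> 'a \<Rightarrow> real) \<Rightarrow> blk \<Rightarrow> 'a set set" where
  "blk_sets M c N X0 Nr Y b = (case b of
      B0 r \<Rightarrow> gen M (X0 r)
    | BN l \<Rightarrow> gen M (\<lambda>\<omega>. real (Nr l \<omega>))
    | BY l r \<Rightarrow> gen M (Y l r)
    | BTail \<Rightarrow> sigma_sets (space M) (\<Union>l\<in>{Lvl c N..}. gen M (Y l 1)))"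

end

theory Submission
  imports Defs
begin

lemma exp_minus_bound:
  fixes y :: real assumes "0 \<le> y"
  shows "\<bar>exp (- y) - (1 - y)\<bar> \<le> y\<^sup>2"
proof -
  have a: "1 - y \<le> exp (- y)" by (rule exp_minus_ge)
  have "1 + y \<le> exp y" by (rule exp_ge_add_one_self)
  then have "exp (- y) \<le> 1 / (1 + y)" using assms
    by (simp add: exp_minus field_simps)
  also have "1 / (1 + y) = (1 - y) + y\<^sup>2 / (1 + y)" using assms
    by (simp add: field_simps power2_eq_square)
  also have "y\<^sup>2 / (1 + y) \<le> y\<^sup>2" using assms
    by (simp add: divide_le_eq mult_le_cancel_left1)
  finally show ?thesis using a by simp
qed

lemma char_exp_approx:
  assumes rd: "real_distribution \<mu>" and i1: "integrable \<mu> (\<lambda>x. x)" and i2: "integrable \<mu> (\<lambda>x. x\<^sup>2)"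
    and m0: "(\<integral>x. x \<partial>\<mu>) = 0" and v: "(\<integral>x. x\<^sup>2 \<partial>\<mu>) = v"
  shows "cmod (char \<mu> s - complex_of_real (exp (- (s\<^sup>2 * v / 2))))
     \<le> s\<^sup>2 / 6 * (\<integral>x. min (6 * x\<^sup>2) (\<bar>s\<bar> * \<bar>x\<bar> ^ 3) \<partial>\<mu>) + (s\<^sup>2 * v / 2)\<^sup>2"
proof -
  interpret real_distribution \<mu> by fact
  have v0: "0 \<le> v" using v by (metis integral_nonneg_AE AE_I2 zero_le_power2)
  have var: "variance (\<lambda>x. x) = v" using m0 v by simp
  have 1: "cmod (char \<mu> s - (1 - s^2 * v / 2)) \<le> (s^2 / 6) * expectation (\<lambda>x. min (6 * x^2) (abs s * (abs x)^3))"
    by (rule char_approx3[OF i1 m0 i2 var])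
  have 2: "cmod (complex_of_real (1 - s^2 * v / 2) - complex_of_real (exp (- (s\<^sup>2 * v / 2)))) \<le> (s\<^sup>2 * v / 2)\<^sup>2"
  proof -
    have "\<bar>exp (- (s\<^sup>2 * v / 2)) - (1 - s\<^sup>2 * v / 2)\<bar> \<le> (s\<^sup>2 * v / 2)\<^sup>2"
      by (rule exp_minus_bound) (use v0 in simp)
    then show ?thesis by (simp only: norm_of_real of_real_diff[symmetric])
  qed
  have "cmod (char \<mu> s - complex_of_real (exp (- (s\<^sup>2 * v / 2))))
     \<le> cmod (char \<mu> s - (1 - s^2 * v / 2)) + cmod (complex_of_real (1 - s^2 * v / 2) - complex_of_real (exp (- (s\<^sup>2 * v / 2))))"
    using norm_triangle_ineq[of "char \<mu> s - complex_of_real (1 - s^2 * v / 2)" "complex_of_real (1 - s^2 * v / 2) - complex_of_real (exp (- (s\<^sup>2 * v / 2)))"]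
    by simp
  with 1 2 show ?thesis by simp
qed

lemma min_moment_tendsto:
  fixes \<mu> :: "real measure" and \<epsilon> :: "nat \<Rightarrow> real"
  assumes sb: "sets \<mu> = sets borel" and i2: "integrable \<mu> (\<lambda>x. x\<^sup>2)" and e: "\<epsilon> \<longlonglongrightarrow> 0"
  shows "(\<lambda>n. \<integral>x. min (6 * x\<^sup>2) (\<bar>\<epsilon> n\<bar> * \<bar>x\<bar> ^ 3) \<partial>\<mu>) \<longlonglongrightarrow> 0"
proof -
  have "(\<lambda>n. \<integral>x. min (6 * x\<^sup>2) (\<bar>\<epsilon> n\<bar> * \<bar>x\<bar> ^ 3) \<partial>\<mu>) \<longlonglongrightarrow> (\<integral>x. 0 \<partial>\<mu>)"
  proof (rule integral_dominated_convergence[where w = "\<lambda>x. 6 * x\<^sup>2"])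
    show "integrable \<mu> (\<lambda>x. 6 * x\<^sup>2)" using i2 by simp
    show "AE x in \<mu>. (\<lambda>n. min (6 * x\<^sup>2) (\<bar>\<epsilon> n\<bar> * \<bar>x\<bar> ^ 3)) \<longlonglongrightarrow> 0"
    proof (rule AE_I2)
      fix x :: real
      have "(\<lambda>n. \<bar>\<epsilon> n\<bar> * \<bar>x\<bar> ^ 3) \<longlonglongrightarrow> 0 * \<bar>x\<bar> ^ 3"
        by (intro tendsto_intros tendsto_rabs_zero e)
      then have "(\<lambda>n. min (6 * x\<^sup>2) (\<bar>\<epsilon> n\<bar> * \<bar>x\<bar> ^ 3)) \<longlonglongrightarrow> min (6 * x\<^sup>2) 0"
        by (intro tendsto_min tendsto_const) simp
      then show "(\<lambda>n. min (6 * x\<^sup>2) (\<bar>\<epsilon> n\<bar> * \<bar>x\<bar> ^ 3)) \<longlonglongrightarrow> 0"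
        using min_absorb2[of 0 "6 * x\<^sup>2"] by simp
    qed
    show "\<And>n. AE x in \<mu>. norm (min (6 * x\<^sup>2) (\<bar>\<epsilon> n\<bar> * \<bar>x\<bar> ^ 3)) \<le> 6 * x\<^sup>2"
      by (intro AE_I2) auto
    show "\<And>n. (\<lambda>x. min (6 * x\<^sup>2) (\<bar>\<epsilon> n\<bar> * \<bar>x\<bar> ^ 3)) \<in> borel_measurable \<mu>"
      unfolding measurable_cong_sets[OF sb refl] by measurable
  qed simp
  then show ?thesis by simp
qed

lemma char_normal_law:
  assumes "0 \<le> v"
  shows "char (normal_law 0 v) t = complex_of_real (exp (- (v * t\<^sup>2 / 2)))"
proof (cases "v = 0")
  case True
  then show ?thesis by (simp add: normal_law_def char_def integral_return)
next
  case False
  define \<sigma> where "\<sigma> = sqrt v"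
  have s: "0 < \<sigma>" using assms False by (simp add: \<sigma>_def)
  have "char (normal_law 0 v) t = char (density lborel (normal_density 0 \<sigma>)) t"
    using False by (simp add: normal_law_def \<sigma>_def)
  also have "\<dots> = (\<integral>x. normal_density 0 \<sigma> x *\<^sub>R iexp (t * x) \<partial>lborel)"
    unfolding char_def
    by (subst integral_density) (auto simp: normal_density_nonneg)
  also have "\<dots> = \<bar>\<sigma>\<bar> *\<^sub>R (\<integral>y. normal_density 0 \<sigma> (0 + \<sigma> * y) *\<^sub>R iexp (t * (0 + \<sigma> * y)) \<partial>lborel)"
    using s by (intro lborel_integral_real_affine) simp
  also have "\<dots> = (\<integral>y. std_normal_density y *\<^sub>R iexp ((t * \<sigma>) * y) \<partial>lborel)"
  proof -
    have "\<And>y. \<sigma> * normal_density 0 \<sigma> (\<sigma> * y) = std_normal_density y"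
      using s by (simp add: normal_density_def real_sqrt_mult field_simps power2_eq_square)
    then show ?thesis using s
      by (simp add: scaleR_scaleR mult.assoc mult.left_commute[of t] flip: integral_scaleR_right)
  qed
  also have "\<dots> = char std_normal_distribution (t * \<sigma>)"
    unfolding char_def
    by (subst integral_density) (auto simp: normal_density_nonneg)
  also have "\<dots> = complex_of_real (exp (- (v * t\<^sup>2 / 2)))"
    using s assms by (simp add: char_std_normal_distribution \<sigma>_def power_mult_distrib mult.commute)
  finally show ?thesis .
qed

lemma real_distribution_normal_law:
  assumes "0 \<le> v" shows "real_distribution (normal_law 0 v)"
proof (cases "v = 0")
  case True
  then show ?thesis
    by (simp add: normal_law_def real_distribution_def real_distribution_axioms_def prob_space_return)
next
  case False
  then have "0 < sqrt v" using assms by simp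
  then show ?thesis using False
    by (simp add: normal_law_def real_distribution_def real_distribution_axioms_def prob_space_normal_density)
qed

lemma cmod_iexp_diff: "cmod (iexp a - iexp b) \<le> \<bar>a - b\<bar>"
proof -
  have "iexp a - iexp b = iexp b * (iexp (a - b) - 1)"
    by (simp add: algebra_simps flip: exp_add)
  then have "cmod (iexp a - iexp b) = cmod (iexp (a - b) - 1)"
    by (simp add: norm_mult)
  also have "\<dots> \<le> \<bar>a - b\<bar>"
    using iexp_approx1[of "a - b" 0] by simp
  finally show ?thesis .
qed

lemma (in prob_space) char_diff_le:
  assumes X[measurable]: "X \<in> borel_measurable M" and A[measurable]: "A \<in> borel_measurable M"
    and i: "integrable M (\<lambda>\<omega>. X \<omega> - A \<omega>)"
  shows "cmod (char (distr M borel X) t - char (distr M borel A) t) \<le> \<bar>t\<bar> * (\<integral>\<omega>. \<bar>X \<omega> - A \<omega>\<bar> \<partial>M)"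
proof -
  have "char (distr M borel X) t - char (distr M borel A) t = (CLINT \<omega>|M. iexp (t * X \<omega>) - iexp (t * A \<omega>))"
    unfolding char_def by (simp add: integral_distr integrable_iexp)
  also have "cmod \<dots> \<le> (\<integral>\<omega>. cmod (iexp (t * X \<omega>) - iexp (t * A \<omega>)) \<partial>M)"
    by (rule integral_norm_bound)
  also have "\<dots> \<le> (\<integral>\<omega>. \<bar>t\<bar> * \<bar>X \<omega> - A \<omega>\<bar> \<partial>M)"
  proof (rule integral_mono)
    show "integrable M (\<lambda>\<omega>. cmod (iexp (t * X \<omega>) - iexp (t * A \<omega>)))"
      by (intro integrable_norm Bochner_Integration.integrable_diff integrable_iexp) auto
    show "integrable M (\<lambda>\<omega>. \<bar>t\<bar> * \<bar>X \<omega> - A \<omega>\<bar>)"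
      using i by (intro integrable_mult_right integrable_abs)
    fix \<omega> show "cmod (iexp (t * X \<omega>) - iexp (t * A \<omega>)) \<le> \<bar>t\<bar> * \<bar>X \<omega> - A \<omega>\<bar>"
      using cmod_iexp_diff[of "t * X \<omega>" "t * A \<omega>"] by (simp add: right_diff_distrib[symmetric] abs_mult)
  qed
  also have "\<dots> = \<bar>t\<bar> * (\<integral>\<omega>. \<bar>X \<omega> - A \<omega>\<bar> \<partial>M)" by simp
  finally show ?thesis .
qed

lemma min_int:
  fixes \<mu> :: "real measure"
  assumes sb: "sets \<mu> = sets borel" and i2: "integrable \<mu> (\<lambda>x. x\<^sup>2)" and e: "0 \<le> \<epsilon>"
  shows "integrable \<mu> (\<lambda>x. min (6 * x\<^sup>2) (\<epsilon> * \<bar>x\<bar> ^ 3))"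
    and "0 \<le> (\<integral>x. min (6 * x\<^sup>2) (\<epsilon> * \<bar>x\<bar> ^ 3) \<partial>\<mu>)"
    and "(\<integral>x. min (6 * x\<^sup>2) (\<epsilon> * \<bar>x\<bar> ^ 3) \<partial>\<mu>) \<le> 6 * (\<integral>x. x\<^sup>2 \<partial>\<mu>)"
proof -
  have m: "(\<lambda>x. min (6 * x\<^sup>2) (\<epsilon> * \<bar>x\<bar> ^ 3)) \<in> borel_measurable \<mu>"
    unfolding measurable_cong_sets[OF sb refl] by measurable
  show 1: "integrable \<mu> (\<lambda>x. min (6 * x\<^sup>2) (\<epsilon> * \<bar>x\<bar> ^ 3))"
    by (rule Bochner_Integration.integrable_bound[where f="\<lambda>x. 6 * x\<^sup>2"])
       (use i2 m e in auto)
  show "0 \<le> (\<integral>x. min (6 * x\<^sup>2) (\<epsilon> * \<bar>x\<bar> ^ 3) \<partial>\<mu>)"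
    using e by (intro integral_nonneg_AE AE_I2) auto
  have "(\<integral>x. min (6 * x\<^sup>2) (\<epsilon> * \<bar>x\<bar> ^ 3) \<partial>\<mu>) \<le> (\<integral>x. 6 * x\<^sup>2 \<partial>\<mu>)"
    by (rule integral_mono[OF 1]) (use i2 in auto)
  then show "(\<integral>x. min (6 * x\<^sup>2) (\<epsilon> * \<bar>x\<bar> ^ 3) \<partial>\<mu>) \<le> 6 * (\<integral>x. x\<^sup>2 \<partial>\<mu>)" by simp
qed

lemma min_int_mono:
  fixes \<mu> :: "real measure"
  assumes sb: "sets \<mu> = sets borel" and i2: "integrable \<mu> (\<lambda>x. x\<^sup>2)" and e: "0 \<le> \<epsilon>" "\<epsilon> \<le> \<epsilon>'"
  shows "(\<integral>x. min (6 * x\<^sup>2) (\<epsilon> * \<bar>x\<bar> ^ 3) \<partial>\<mu>) \<le> (\<integral>x. min (6 * x\<^sup>2) (\<epsilon>' * \<bar>x\<bar> ^ 3) \<partial>\<mu>)"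
proof (rule integral_mono)
  show "integrable \<mu> (\<lambda>x. min (6 * x\<^sup>2) (\<epsilon> * \<bar>x\<bar> ^ 3))" by (rule min_int(1)[OF sb i2 e(1)])
  show "integrable \<mu> (\<lambda>x. min (6 * x\<^sup>2) (\<epsilon>' * \<bar>x\<bar> ^ 3))" by (rule min_int(1)[OF sb i2]) (use e in simp)
  fix x :: real
  have "\<epsilon> * \<bar>x\<bar> ^ 3 \<le> \<epsilon>' * \<bar>x\<bar> ^ 3" using e by (intro mult_right_mono) auto
  then show "min (6 * x\<^sup>2) (\<epsilon> * \<bar>x\<bar> ^ 3) \<le> min (6 * x\<^sup>2) (\<epsilon>' * \<bar>x\<bar> ^ 3)" by simp
qed

lemma ratio_lim:
  fixes c :: real assumes "0 < c"
  shows "(\<lambda>N. real N / (c * real N + 1)) \<longlonglongrightarrow> 1 / c"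
proof -
  have "(\<lambda>N. 1 / (c + 1 / real N)) \<longlonglongrightarrow> 1 / (c + 0)"
    by (intro tendsto_intros lim_1_over_n) (use assms in simp)
  moreover have "\<forall>\<^sub>F N in sequentially. 1 / (c + 1 / real N) = real N / (c * real N + 1)"
  proof (rule eventually_sequentiallyI[of 1])
    fix N :: nat assume "1 \<le> N"
    then show "1 / (c + 1 / real N) = real N / (c * real N + 1)" using assms
      by (simp add: field_simps)
  qed
  ultimately show ?thesis by (simp add: tendsto_cong)
qed

lemma inv_sqrt_lim: "(\<lambda>N. 1 / sqrt (real N)) \<longlonglongrightarrow> 0"
  by (intro tendsto_divide_0[OF tendsto_const] sqrt_at_top[THEN filterlim_compose]
      filterlim_real_sequentially filterlim_at_top_imp_at_infinity)

lemma summable_sq_nonneg: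
  fixes a :: "nat \<Rightarrow> real"
  assumes "summable a" "\<And>l. 0 \<le> a l"
  shows "summable (\<lambda>l. (a l)\<^sup>2)"
proof (rule summable_comparison_test_ev[OF _ assms(1)])
  have "a \<longlonglongrightarrow> 0" by (rule summable_LIMSEQ_zero[OF assms(1)])
  then have "\<forall>\<^sub>F l in sequentially. dist (a l) 0 < 1" by (rule tendstoD) simp
  then show "\<forall>\<^sub>F l in sequentially. norm ((a l)\<^sup>2) \<le> a l"
  proof eventually_elim
    case (elim l)
    then have "a l \<le> 1" using assms(2)[of l] by simp
    then show ?case using assms(2)[of l] by (simp add: power2_eq_square mult_left_le_one_le)
  qed
qed

locale lev_setup =
  fixes c :: "nat \<Rightarrow> real" and Lv :: "nat \<Rightarrow> nat" and n :: "nat \<Rightarrow> nat \<Rightarrow> nat"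
  assumes c_pos: "\<And>l. 0 < c l"
    and Lv_ev: "\<And>l. \<forall>\<^sub>F N in sequentially. l < Lv N"
    and n_lo: "\<And>N l. l < Lv N \<Longrightarrow> c l * real N \<le> real (n N l)"
    and n_hi: "\<And>N l. l < Lv N \<Longrightarrow> real (n N l) \<le> c l * real N + 1"
    and n_pos: "\<And>N l. l < Lv N \<Longrightarrow> 1 \<le> n N l"
begin

lemma N_over_n: "l < Lv N \<Longrightarrow> real N / real (n N l) \<le> 1 / c l"
  using n_lo[of l N] n_pos[of l N] c_pos[of l]
  by (simp add: field_simps)

lemma var_sum_lim:
  fixes v :: "nat \<Rightarrow> real"
  assumes v0: "\<And>l. 0 \<le> v l" and summ: "summable (\<lambda>l. v l / c l)"
  shows "(\<lambda>N. \<Sum>l<Lv N. real N * v l / real (n N l)) \<longlonglongrightarrow> (\<Sum>l. v l / c l)"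
proof -
  define f where "f l N = (if l < Lv N then real N * v l / real (n N l) else 0)" for l N
  have eq: "(\<Sum>l<Lv N. real N * v l / real (n N l)) = (\<Sum>l. f l N)" for N
    by (subst suminf_finite[of "{..<Lv N}"]) (auto simp: f_def)
  have "((\<lambda>N. \<Sum>l. f l N) \<longlongrightarrow> (\<Sum>l. v l / c l)) sequentially"
  proof (rule tannerys_theorem[THEN conjunct2, THEN conjunct2])
    show "summable (\<lambda>l. v l / c l)" by fact
    show "\<forall>\<^sub>F (l, N) in sequentially \<times>\<^sub>F sequentially. norm (f l N) \<le> v l / c l"
    proof (intro always_eventually allI, clarify)
      fix l N
      show "norm (f l N) \<le> v l / c l"
      proof (cases "l < Lv N")
        case True
        have "real N * v l / real (n N l) = v l * (real N / real (n N l))" by simp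
        also have "\<dots> \<le> v l * (1 / c l)"
          by (rule mult_left_mono[OF N_over_n[OF True] v0])
        finally show ?thesis using True v0[of l] n_pos[OF True] by (simp add: f_def)
      qed (use v0[of l] c_pos[of l] in \<open>simp add: f_def\<close>)
    qed
    fix l
    show "(\<lambda>N. f l N) \<longlonglongrightarrow> v l / c l"
    proof (rule tendsto_sandwich[where f="\<lambda>N. v l * (real N / (c l * real N + 1))" and h="\<lambda>N. v l / c l"])
      show "(\<lambda>N. v l * (real N / (c l * real N + 1))) \<longlonglongrightarrow> v l / c l"
        using tendsto_mult[OF tendsto_const[of "v l"] ratio_lim[OF c_pos[of l]]] by simp
      show "\<forall>\<^sub>F N in sequentially. v l * (real N / (c l * real N + 1)) \<le> f l N"
        using Lv_ev[of l]
      proof eventually_elim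
        case (elim N)
        have "real N / (c l * real N + 1) \<le> real N / real (n N l)"
          using n_hi[OF elim] n_pos[OF elim] by (intro divide_left_mono) auto
        then have "v l * (real N / (c l * real N + 1)) \<le> v l * (real N / real (n N l))"
          using v0[of l] by (rule mult_left_mono)
        then show ?case using elim by (simp add: f_def mult.commute)
      qed
      show "\<forall>\<^sub>F N in sequentially. f l N \<le> v l / c l"
        using Lv_ev[of l]
      proof eventually_elim
        case (elim N)
        have "v l * (real N / real (n N l)) \<le> v l * (1 / c l)"
          by (rule mult_left_mono[OF N_over_n[OF elim] v0])
        then show ?case using elim by (simp add: f_def mult.commute)
      qed
    qed simp
  qed simp
  then show ?thesis by (simp add: eq)
qed

end

lemma frac_facts:
  fixes x m c :: real
  assumes c: "0 < c" and x: "1 \<le> x" and m: "1 \<le> m" and cm: "c * x \<le> m"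
  shows "x / m \<le> 1 / c" and "sqrt x / m \<le> 1 / (c * sqrt x)"
    and "x\<^sup>2 / m ^ 3 \<le> 1 / (c ^ 3 * x)" and "x\<^sup>2 / m ^ 3 \<le> 1 / c\<^sup>2"
proof -
  have m0: "0 < m" using m by simp
  show "x / m \<le> 1 / c" using c m0 cm by (simp add: field_simps)
  have sx: "sqrt x * sqrt x = x" using x by simp
  have "sqrt x / m \<le> sqrt x / (c * x)"
    using c x cm m0 by (intro divide_left_mono) auto
  also have "\<dots> = sqrt x / (c * (sqrt x * sqrt x))" using x by simp
  also have "\<dots> = 1 / (c * sqrt x)" using x c by (simp add: divide_simps)
  finally show "sqrt x / m \<le> 1 / (c * sqrt x)" .
  have cx3: "(c * x) ^ 3 \<le> m ^ 3" using c x cm by (intro power_mono) auto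
  have "x\<^sup>2 / m ^ 3 \<le> x\<^sup>2 / (c * x) ^ 3"
    using c x cx3 m0 by (intro divide_left_mono) auto
  also have "\<dots> = 1 / (c ^ 3 * x)" using c x by (simp add: field_simps power2_eq_square power3_eq_cube)
  finally show "x\<^sup>2 / m ^ 3 \<le> 1 / (c ^ 3 * x)" .
  have cx2: "(c * x)\<^sup>2 \<le> m\<^sup>2" using c x cm by (intro power_mono) auto
  have "m\<^sup>2 \<le> m ^ 3" using m by (simp add: power_increasing)
  then have "(c * x)\<^sup>2 \<le> m ^ 3" using cx2 by linarith
  then have "x\<^sup>2 / m ^ 3 \<le> x\<^sup>2 / (c * x)\<^sup>2"
    using c x m0 by (intro divide_left_mono) auto
  also have "\<dots> = 1 / c\<^sup>2" using c x by (simp add: field_simps power2_eq_square)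
  finally show "x\<^sup>2 / m ^ 3 \<le> 1 / c\<^sup>2" .
qed

context lev_setup begin

definition gmin :: "real measure \<Rightarrow> real \<Rightarrow> real" where
  "gmin \<mu> e = (\<integral>x. min (6 * x\<^sup>2) (e * \<bar>x\<bar> ^ 3) \<partial>\<mu>)"

lemma err_sum_lim:
  fixes \<mu> :: "nat \<Rightarrow> real measure" and v :: "nat \<Rightarrow> real" and t :: real
  assumes sb: "\<And>l. sets (\<mu> l) = sets borel" and i2: "\<And>l. integrable (\<mu> l) (\<lambda>x. x\<^sup>2)"
    and v: "\<And>l. v l = (\<integral>x. x\<^sup>2 \<partial>\<mu> l)" and summ: "summable (\<lambda>l. v l / c l)"
  shows "(\<lambda>N. \<Sum>l<Lv N. real (n N l) * ((t * sqrt (real N) / real (n N l))\<^sup>2 / 6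
             * gmin (\<mu> l) \<bar>t * sqrt (real N) / real (n N l)\<bar>
           + ((t * sqrt (real N) / real (n N l))\<^sup>2 * v l / 2)\<^sup>2)) \<longlonglongrightarrow> 0"
proof -
  have v0: "0 \<le> v l" for l unfolding v by (intro integral_nonneg_AE AE_I2) auto
  define E where "E l N = real (n N l) * ((t * sqrt (real N) / real (n N l))\<^sup>2 / 6
             * gmin (\<mu> l) \<bar>t * sqrt (real N) / real (n N l)\<bar>
           + ((t * sqrt (real N) / real (n N l))\<^sup>2 * v l / 2)\<^sup>2)" for l N
  define f where "f l N = (if l < Lv N then E l N else 0)" for l N
  have gnn: "0 \<le> gmin (\<mu> l) e" if "0 \<le> e" for l e
    unfolding gmin_def by (rule min_int(2)[OF sb i2 that])
  have gle: "gmin (\<mu> l) e \<le> 6 * v l" if "0 \<le> e" for l e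
    unfolding gmin_def v by (rule min_int(3)[OF sb i2 that])
  have Eform: "E l N = t\<^sup>2 / 6 * (real N / real (n N l)) * gmin (\<mu> l) (\<bar>t\<bar> * (sqrt (real N) / real (n N l)))
       + t ^ 4 / 4 * (v l)\<^sup>2 * ((real N)\<^sup>2 / real (n N l) ^ 3)" if "l < Lv N" for l N
  proof -
    have np: "1 \<le> real (n N l)" using n_pos[OF that] by simp
    show ?thesis using np
      apply (simp add: E_def power_divide power_mult_distrib abs_mult field_simps)
      apply algebra
      done
  qed
  have E0: "E l 0 = 0" for l by (simp add: E_def)
  have eq: "(\<Sum>l<Lv N. E l N) = (\<Sum>l. f l N)" for N
    by (subst suminf_finite[of "{..<Lv N}"]) (auto simp: f_def)
  define Mb where "Mb l = t\<^sup>2 * (v l / c l) + t ^ 4 / 4 * (v l / c l)\<^sup>2" for l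
  have "((\<lambda>N. \<Sum>l. f l N) \<longlongrightarrow> (\<Sum>l. 0)) sequentially"
  proof (rule tannerys_theorem[THEN conjunct2, THEN conjunct2])
    have sq: "summable (\<lambda>l. (v l / c l)\<^sup>2)"
      by (rule summable_sq_nonneg[OF summ], rule divide_nonneg_pos[OF v0 c_pos])
    show "summable Mb" unfolding Mb_def
      by (intro summable_add summable_mult summ sq)
    show "\<forall>\<^sub>F (l, N) in sequentially \<times>\<^sub>F sequentially. norm (f l N) \<le> Mb l"
    proof (intro always_eventually allI, clarify)
      fix l N
      show "norm (f l N) \<le> Mb l"
      proof (cases "l < Lv N \<and> 1 \<le> N")
        case True
        have x1: "1 \<le> real N" using True by simp
        have m1: "1 \<le> real (n N l)" using n_pos True by simp
        note ff = frac_facts[OF c_pos[of l] x1 m1 n_lo[OF conjunct1[OF True]]]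
        have e0: "0 \<le> \<bar>t\<bar> * (sqrt (real N) / real (n N l))" by simp
        have A: "t\<^sup>2 / 6 * (real N / real (n N l)) * gmin (\<mu> l) (\<bar>t\<bar> * (sqrt (real N) / real (n N l)))
            \<le> t\<^sup>2 / 6 * (1 / c l) * (6 * v l)"
          by (intro mult_mono ff gle gnn e0 mult_nonneg_nonneg) (use c_pos[of l] in auto)
        have B: "t ^ 4 / 4 * (v l)\<^sup>2 * ((real N)\<^sup>2 / real (n N l) ^ 3) \<le> t ^ 4 / 4 * (v l)\<^sup>2 * (1 / (c l)\<^sup>2)"
          by (intro mult_left_mono ff) auto
        have "f l N = E l N" using True by (simp add: f_def)
        also have "\<dots> \<le> t\<^sup>2 / 6 * (1 / c l) * (6 * v l) + t ^ 4 / 4 * (v l)\<^sup>2 * (1 / (c l)\<^sup>2)"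
          using A B Eform[of l N] True by simp
        also have "\<dots> = Mb l" by (simp add: Mb_def power_divide)
        finally have "f l N \<le> Mb l" .
        moreover have "0 \<le> f l N"
          using True Eform[of l N] gnn[of "\<bar>t\<bar> * (sqrt (real N) / real (n N l))" l]
          by (simp add: f_def)
        ultimately show ?thesis by simp
      next
        case False
        then have "f l N = 0" by (cases "N = 0") (auto simp: f_def E0)
        moreover have "0 \<le> Mb l" unfolding Mb_def using v0[of l] c_pos[of l] by simp
        ultimately show ?thesis by simp
      qed
    qed
    fix l
    define U where "U N = t\<^sup>2 / 6 * (1 / c l) * gmin (\<mu> l) (\<bar>t\<bar> * (1 / (c l * sqrt (real N))))
        + t ^ 4 / 4 * (v l)\<^sup>2 * (1 / (c l ^ 3 * real N))" for N
    show "(\<lambda>N. f l N) \<longlonglongrightarrow> 0"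
    proof (rule tendsto_sandwich[where f="\<lambda>N. 0" and h=U])
      have ev: "\<forall>\<^sub>F N in sequentially. l < Lv N \<and> 1 \<le> N"
        using Lv_ev[of l] eventually_ge_at_top[of 1] by eventually_elim simp
      show "\<forall>\<^sub>F N in sequentially. 0 \<le> f l N"
        using ev
      proof eventually_elim
        case (elim N)
        then show ?case
          using Eform[of l N] gnn[of "\<bar>t\<bar> * (sqrt (real N) / real (n N l))" l]
          by (simp add: f_def)
      qed
      show "\<forall>\<^sub>F N in sequentially. f l N \<le> U N"
        using ev
      proof eventually_elim
        case (elim N)
        have x1: "1 \<le> real N" using elim by simp
        have m1: "1 \<le> real (n N l)" using n_pos elim by simp
        note ff = frac_facts[OF c_pos[of l] x1 m1 n_lo[OF conjunct1[OF elim]]]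
        have e0: "0 \<le> \<bar>t\<bar> * (sqrt (real N) / real (n N l))" by simp
        have gm: "gmin (\<mu> l) (\<bar>t\<bar> * (sqrt (real N) / real (n N l))) \<le> gmin (\<mu> l) (\<bar>t\<bar> * (1 / (c l * sqrt (real N))))"
          unfolding gmin_def by (rule min_int_mono[OF sb i2 e0]) (intro mult_left_mono ff; simp)
        have A: "t\<^sup>2 / 6 * (real N / real (n N l)) * gmin (\<mu> l) (\<bar>t\<bar> * (sqrt (real N) / real (n N l)))
            \<le> t\<^sup>2 / 6 * (1 / c l) * gmin (\<mu> l) (\<bar>t\<bar> * (1 / (c l * sqrt (real N))))"
          by (intro mult_mono ff gm gnn e0 mult_nonneg_nonneg) (use c_pos[of l] in auto)
        have B: "t ^ 4 / 4 * (v l)\<^sup>2 * ((real N)\<^sup>2 / real (n N l) ^ 3) \<le> t ^ 4 / 4 * (v l)\<^sup>2 * (1 / (c l ^ 3 * real N))"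
          by (intro mult_left_mono ff) auto
        show ?case using A B Eform[of l N] elim by (simp add: f_def U_def)
      qed
      have "(\<lambda>N. \<bar>t\<bar> / c l * (1 / sqrt (real N))) \<longlonglongrightarrow> \<bar>t\<bar> / c l * 0"
        by (intro tendsto_intros inv_sqrt_lim)
      then have "(\<lambda>N. \<bar>t\<bar> * (1 / (c l * sqrt (real N)))) \<longlonglongrightarrow> 0" by simp
      then have g0: "(\<lambda>N. gmin (\<mu> l) \<bar>\<bar>t\<bar> * (1 / (c l * sqrt (real N)))\<bar>) \<longlonglongrightarrow> 0"
        unfolding gmin_def by (rule min_moment_tendsto[OF sb i2])
      have g0': "(\<lambda>N. gmin (\<mu> l) (\<bar>t\<bar> * (1 / (c l * sqrt (real N))))) \<longlonglongrightarrow> 0"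
        using g0 c_pos[of l] by (simp add: abs_mult)
      have "(\<lambda>N. 1 / (c l ^ 3 * real N)) \<longlonglongrightarrow> 0"
        using tendsto_mult[OF tendsto_const[of "1 / c l ^ 3"] lim_1_over_n] by simp
      then have "(\<lambda>N. t\<^sup>2 / 6 * (1 / c l) * gmin (\<mu> l) (\<bar>t\<bar> * (1 / (c l * sqrt (real N))))
        + t ^ 4 / 4 * (v l)\<^sup>2 * (1 / (c l ^ 3 * real N))) \<longlonglongrightarrow> t\<^sup>2 / 6 * (1 / c l) * 0 + t ^ 4 / 4 * (v l)\<^sup>2 * 0"
        by (intro tendsto_add tendsto_mult tendsto_const g0')
      then show "U \<longlonglongrightarrow> 0" unfolding U_def by simp
    qed simp
  qed simp
  then have "(\<lambda>N. \<Sum>l<Lv N. E l N) \<longlonglongrightarrow> 0" by (simp only: eq suminf_zero)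
  then show ?thesis by (simp only: E_def)
qed

end

context lev_setup begin

lemma Phi_limit:
  fixes \<mu>0 :: "real measure" and \<mu> :: "nat \<Rightarrow> real measure" and v0 :: real and v :: "nat \<Rightarrow> real" and t :: real
  assumes rd0: "real_distribution \<mu>0" and i10: "integrable \<mu>0 (\<lambda>x. x)" and i20: "integrable \<mu>0 (\<lambda>x. x\<^sup>2)"
    and m00: "(\<integral>x. x \<partial>\<mu>0) = 0" and v0: "(\<integral>x. x\<^sup>2 \<partial>\<mu>0) = v0"
    and rd: "\<And>l. real_distribution (\<mu> l)" and i1: "\<And>l. integrable (\<mu> l) (\<lambda>x. x)"
    and i2: "\<And>l. integrable (\<mu> l) (\<lambda>x. x\<^sup>2)"
    and m0: "\<And>l. (\<integral>x. x \<partial>\<mu> l) = 0" and v: "\<And>l. v l = (\<integral>x. x\<^sup>2 \<partial>\<mu> l)"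
    and summ: "summable (\<lambda>l. v l / c l)"
  shows "(\<lambda>N. char \<mu>0 (t / sqrt (real N)) ^ N * (\<Prod>l<Lv N. char (\<mu> l) (t * sqrt (real N) / real (n N l)) ^ n N l))
     \<longlonglongrightarrow> complex_of_real (exp (- ((v0 + (\<Sum>l. v l / c l)) * t\<^sup>2 / 2)))"
proof -
  have sb0: "sets \<mu>0 = sets borel" using rd0 by (simp add: real_distribution_def real_distribution_axioms_def)
  have sb: "sets (\<mu> l) = sets borel" for l using rd[of l] by (simp add: real_distribution_def real_distribution_axioms_def)
  have vv0: "0 \<le> v l" for l unfolding v by (intro integral_nonneg_AE AE_I2) auto
  have v00: "0 \<le> v0" unfolding v0[symmetric] by (intro integral_nonneg_AE AE_I2) auto
  define s where "s N l = t * sqrt (real N) / real (n N l)" for N l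
  define a0 where "a0 N = char \<mu>0 (t / sqrt (real N))" for N
  define b0 where "b0 N = complex_of_real (exp (- ((t / sqrt (real N))\<^sup>2 * v0 / 2)))" for N
  define al where "al N l = char (\<mu> l) (s N l)" for N l
  define bl where "bl N l = complex_of_real (exp (- ((s N l)\<^sup>2 * v l / 2)))" for N l
  define \<Phi> where "\<Phi> N = a0 N ^ N * (\<Prod>l<Lv N. al N l ^ n N l)" for N
  define \<Psi> where "\<Psi> N = b0 N ^ N * (\<Prod>l<Lv N. bl N l ^ n N l)" for N
  define e0 where "e0 N = real N * ((t / sqrt (real N))\<^sup>2 / 6 * gmin \<mu>0 \<bar>t / sqrt (real N)\<bar>
      + ((t / sqrt (real N))\<^sup>2 * v0 / 2)\<^sup>2)" for N
  define el where "el N = (\<Sum>l<Lv N. real (n N l) * ((s N l)\<^sup>2 / 6 * gmin (\<mu> l) \<bar>s N l\<bar>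
           + ((s N l)\<^sup>2 * v l / 2)\<^sup>2))" for N
  let ?L = "complex_of_real (exp (- ((v0 + (\<Sum>l. v l / c l)) * t\<^sup>2 / 2)))"
  have Psi_eq: "\<Psi> N = complex_of_real (exp (- (t\<^sup>2 * v0 / 2)) * exp (- (t\<^sup>2 / 2) * (\<Sum>l<Lv N. real N * v l / real (n N l))))"
    if N1: "1 \<le> N" for N
  proof -
    have "b0 N ^ N = complex_of_real (exp (- ((t / sqrt (real N))\<^sup>2 * v0 / 2)) ^ N)"
      by (simp add: b0_def)
    also have "exp (- ((t / sqrt (real N))\<^sup>2 * v0 / 2)) ^ N = exp (real N * (- ((t / sqrt (real N))\<^sup>2 * v0 / 2)))"
      by (simp only: exp_of_nat_mult)
    also have "real N * (- ((t / sqrt (real N))\<^sup>2 * v0 / 2)) = - (t\<^sup>2 * v0 / 2)"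
      using N1 by (simp add: power_divide)
    finally have 1: "b0 N ^ N = complex_of_real (exp (- (t\<^sup>2 * v0 / 2)))" .
    have 2: "bl N l ^ n N l = complex_of_real (exp (- (t\<^sup>2 / 2) * (real N * v l / real (n N l))))"
      if l: "l < Lv N" for l
    proof -
      have np: "1 \<le> real (n N l)" using n_pos[OF l] by simp
      have "bl N l ^ n N l = complex_of_real (exp (real (n N l) * (- ((s N l)\<^sup>2 * v l / 2))))"
        by (simp only: bl_def exp_of_nat_mult of_real_power)
      also have "real (n N l) * (- ((s N l)\<^sup>2 * v l / 2)) = - (t\<^sup>2 / 2) * (real N * v l / real (n N l))"
        using np by (simp add: s_def power_divide power_mult_distrib field_simps power2_eq_square)
      finally show ?thesis .
    qed
    have "(\<Prod>l<Lv N. bl N l ^ n N l) = (\<Prod>l<Lv N. complex_of_real (exp (- (t\<^sup>2 / 2) * (real N * v l / real (n N l)))))"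
      by (rule prod.cong) (auto simp: 2)
    also have "\<dots> = complex_of_real (\<Prod>l<Lv N. exp (- (t\<^sup>2 / 2) * (real N * v l / real (n N l))))"
      by simp
    also have "(\<Prod>l<Lv N. exp (- (t\<^sup>2 / 2) * (real N * v l / real (n N l)))) =
        exp (\<Sum>l<Lv N. - (t\<^sup>2 / 2) * (real N * v l / real (n N l)))"
      by (simp add: exp_sum)
    also have "(\<Sum>l<Lv N. - (t\<^sup>2 / 2) * (real N * v l / real (n N l))) = - (t\<^sup>2 / 2) * (\<Sum>l<Lv N. real N * v l / real (n N l))"
      by (simp add: sum_distrib_left)
    finally show ?thesis by (simp add: \<Psi>_def 1)
  qed
  have Psi_lim: "\<Psi> \<longlonglongrightarrow> ?L"
  proof -
    have "(\<lambda>N. complex_of_real (exp (- (t\<^sup>2 * v0 / 2)) * exp (- (t\<^sup>2 / 2) * (\<Sum>l<Lv N. real N * v l / real (n N l)))))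
        \<longlonglongrightarrow> complex_of_real (exp (- (t\<^sup>2 * v0 / 2)) * exp (- (t\<^sup>2 / 2) * (\<Sum>l. v l / c l)))"
      by (intro tendsto_intros var_sum_lim vv0 summ)
    also have "exp (- (t\<^sup>2 * v0 / 2)) * exp (- (t\<^sup>2 / 2) * (\<Sum>l. v l / c l)) = exp (- ((v0 + (\<Sum>l. v l / c l)) * t\<^sup>2 / 2))"
      by (simp add: mult_exp_exp add_divide_distrib algebra_simps)
    finally have *: "(\<lambda>N. complex_of_real (exp (- (t\<^sup>2 * v0 / 2)) * exp (- (t\<^sup>2 / 2) * (\<Sum>l<Lv N. real N * v l / real (n N l)))))
        \<longlonglongrightarrow> ?L" .
    have "\<forall>\<^sub>F N in sequentially. complex_of_real (exp (- (t\<^sup>2 * v0 / 2)) * exp (- (t\<^sup>2 / 2) * (\<Sum>l<Lv N. real N * v l / real (n N l)))) = \<Psi> N"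
      using eventually_ge_at_top[of 1] by eventually_elim (simp add: Psi_eq)
    then show ?thesis using * by (rule Lim_transform_eventually[rotated])
  qed
  have e0_lim: "e0 \<longlonglongrightarrow> 0"
  proof -
    define u where "u N = t\<^sup>2 / 6 * gmin \<mu>0 (\<bar>t\<bar> * (1 / sqrt (real N))) + t ^ 4 * v0\<^sup>2 / 4 * (1 / real N)" for N
    have "\<forall>\<^sub>F N in sequentially. u N = e0 N"
      using eventually_ge_at_top[of 1]
    proof eventually_elim
      case (elim N)
      then show ?case
        by (simp add: u_def e0_def power_divide power_mult_distrib abs_divide field_simps)
           (simp add: power2_eq_square power4_eq_xxxx)
    qed
    moreover have "u \<longlonglongrightarrow> 0"
    proof -
      have "(\<lambda>N. \<bar>t\<bar> * (1 / sqrt (real N))) \<longlonglongrightarrow> \<bar>t\<bar> * 0" by (intro tendsto_intros inv_sqrt_lim)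
      then have g: "(\<lambda>N. gmin \<mu>0 \<bar>\<bar>t\<bar> * (1 / sqrt (real N))\<bar>) \<longlonglongrightarrow> 0"
        unfolding gmin_def by (intro min_moment_tendsto[OF sb0 i20]) simp
      have g': "(\<lambda>N. gmin \<mu>0 (\<bar>t\<bar> * (1 / sqrt (real N)))) \<longlonglongrightarrow> 0" using g by (simp add: abs_mult)
      have "u \<longlonglongrightarrow> t\<^sup>2 / 6 * 0 + t ^ 4 * v0\<^sup>2 / 4 * 0"
        unfolding u_def by (intro tendsto_add tendsto_mult tendsto_const g' lim_1_over_n)
      then show ?thesis by simp
    qed
    ultimately show ?thesis by (rule Lim_transform_eventually[rotated])
  qed
  have el_lim: "el \<longlonglongrightarrow> 0"
    unfolding el_def s_def
    by (rule err_sum_lim[OF sb i2 v summ])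
  have bound: "norm (\<Phi> N - \<Psi> N) \<le> e0 N + el N" for N
  proof -
    interpret R0: real_distribution \<mu>0 by (rule rd0)
    have na0: "norm (a0 N) \<le> 1" unfolding a0_def by (rule R0.cmod_char_le_1)
    have nb0: "norm (b0 N) \<le> 1" unfolding b0_def using v00 by simp
    have nal: "norm (al N l) \<le> 1" for l
    proof -
      interpret R: real_distribution "\<mu> l" by (rule rd)
      show ?thesis unfolding al_def by (rule R.cmod_char_le_1)
    qed
    have nbl: "norm (bl N l) \<le> 1" for l unfolding bl_def using vv0[of l] by simp
    define P where "P = (\<Prod>l<Lv N. al N l ^ n N l)"
    define Q where "Q = (\<Prod>l<Lv N. bl N l ^ n N l)"
    have nP: "norm P \<le> 1" unfolding P_def
      by (rule order_trans[OF norm_prod_le]) (auto intro!: prod_le_1 simp: norm_power power_le_one nal)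
    have nbN: "norm (b0 N ^ N) \<le> 1" by (simp add: norm_power power_le_one nb0)
    have "\<Phi> N - \<Psi> N = (a0 N ^ N - b0 N ^ N) * P + b0 N ^ N * (P - Q)"
      by (simp add: \<Phi>_def \<Psi>_def P_def Q_def algebra_simps)
    then have "norm (\<Phi> N - \<Psi> N) \<le> norm (a0 N ^ N - b0 N ^ N) * norm P + norm (b0 N ^ N) * norm (P - Q)"
      by (metis norm_triangle_ineq norm_mult order_trans order_refl)
    also have "\<dots> \<le> norm (a0 N ^ N - b0 N ^ N) + norm (P - Q)"
      using nP nbN by (intro add_mono mult_left_le mult_left_le_one_le) auto
    also have "norm (a0 N ^ N - b0 N ^ N) \<le> e0 N"
    proof -
      have "norm (a0 N ^ N - b0 N ^ N) \<le> real N * norm (a0 N - b0 N)"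
        by (rule norm_power_diff[OF na0 nb0])
      also have "norm (a0 N - b0 N) \<le> (t / sqrt (real N))\<^sup>2 / 6 * gmin \<mu>0 \<bar>t / sqrt (real N)\<bar>
          + ((t / sqrt (real N))\<^sup>2 * v0 / 2)\<^sup>2"
        unfolding a0_def b0_def gmin_def by (rule char_exp_approx[OF rd0 i10 i20 m00 v0])
      finally show ?thesis unfolding e0_def by (simp add: mult_left_mono)
    qed
    also have "norm (P - Q) \<le> el N"
    proof -
      have "norm (P - Q) \<le> (\<Sum>l<Lv N. norm (al N l ^ n N l - bl N l ^ n N l))"
        unfolding P_def Q_def
        by (rule norm_prod_diff) (auto simp: norm_power power_le_one nal nbl)
      also have "\<dots> \<le> (\<Sum>l<Lv N. real (n N l) * ((s N l)\<^sup>2 / 6 * gmin (\<mu> l) \<bar>s N l\<bar>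
           + ((s N l)\<^sup>2 * v l / 2)\<^sup>2))"
      proof (rule sum_mono)
        fix l
        have "norm (al N l ^ n N l - bl N l ^ n N l) \<le> real (n N l) * norm (al N l - bl N l)"
          by (rule norm_power_diff[OF nal nbl])
        also have "norm (al N l - bl N l) \<le> (s N l)\<^sup>2 / 6 * gmin (\<mu> l) \<bar>s N l\<bar> + ((s N l)\<^sup>2 * v l / 2)\<^sup>2"
          unfolding al_def bl_def gmin_def by (rule char_exp_approx[OF rd i1 i2 m0 v[symmetric]])
        finally show "norm (al N l ^ n N l - bl N l ^ n N l) \<le> real (n N l) * ((s N l)\<^sup>2 / 6 * gmin (\<mu> l) \<bar>s N l\<bar>
           + ((s N l)\<^sup>2 * v l / 2)\<^sup>2)" by (simp add: mult_left_mono)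
      qed
      finally show ?thesis unfolding el_def .
    qed
    finally show ?thesis by simp
  qed
  have "(\<lambda>N. \<Phi> N - \<Psi> N) \<longlonglongrightarrow> 0"
  proof (rule Lim_null_comparison)
    show "\<forall>\<^sub>F N in sequentially. norm (\<Phi> N - \<Psi> N) \<le> e0 N + el N" by (intro always_eventually allI bound)
    show "(\<lambda>N. e0 N + el N) \<longlonglongrightarrow> 0" using tendsto_add[OF e0_lim el_lim] by simp
  qed
  then have "(\<lambda>N. (\<Phi> N - \<Psi> N) + \<Psi> N) \<longlonglongrightarrow> 0 + ?L" by (intro tendsto_add Psi_lim)
  then show ?thesis by (simp add: \<Phi>_def a0_def al_def s_def)
qed

end

lemma (in prob_space) indep_sets_reindex:
  assumes ind: "indep_sets F (g ` I)" and inj: "inj_on g I"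
  shows "indep_sets (\<lambda>i. F (g i)) I"
proof (rule indep_setsI)
  fix i assume "i \<in> I" then show "F (g i) \<subseteq> events" using ind by (auto simp: indep_sets_def)
next
  fix A J assume J: "J \<noteq> {}" "J \<subseteq> I" "finite J" and A: "\<forall>j\<in>J. A j \<in> F (g j)"
  define A' where "A' x = A (the_inv_into I g x)" for x
  have A'g: "A' (g j) = A j" if "j \<in> J" for j
    using that J inj by (auto simp: A'_def the_inv_into_f_f)
  have "prob (\<Inter>x\<in>g ` J. A' x) = (\<Prod>x\<in>g ` J. prob (A' x))"
    by (rule indep_setsD[OF ind]) (use J A A'g in auto)
  moreover have "(\<Inter>x\<in>g ` J. A' x) = (\<Inter>j\<in>J. A j)" using A'g by auto
  moreover have "(\<Prod>x\<in>g ` J. prob (A' x)) = (\<Prod>j\<in>J. prob (A j))"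
    using J inj by (subst prod.reindex) (auto intro: inj_on_subset simp: A'g)
  ultimately show "prob (\<Inter>j\<in>J. A j) = (\<Prod>j\<in>J. prob (A j))" by simp
qed

lemma (in prob_space) bern_facts:
  fixes Nr :: "'a \<Rightarrow> nat"
  assumes m: "Nr \<in> measurable M (count_space UNIV)"
    and d: "distr M (count_space UNIV) Nr = measure_pmf (map_pmf (\<lambda>b. if b then 1 else 0) (bernoulli_pmf p))"
    and p: "0 \<le> p" "p \<le> 1"
  shows "AE \<omega> in M. Nr \<omega> = 0 \<or> Nr \<omega> = 1"
    and "integrable M (\<lambda>\<omega>. real (Nr \<omega>))"
    and "(\<integral>\<omega>. real (Nr \<omega>) \<partial>M) = p"
proof -
  have "AE x in distr M (count_space UNIV) Nr. x = 0 \<or> x = 1"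
    unfolding d by (auto simp: AE_measure_pmf_iff)
  then show "AE \<omega> in M. Nr \<omega> = 0 \<or> Nr \<omega> = 1"
    by (subst (asm) AE_distr_iff) (auto simp: m)
  have fin: "finite (set_pmf (map_pmf (\<lambda>b. if b then 1 else (0::nat)) (bernoulli_pmf p)))" by simp
  have "integrable (distr M (count_space UNIV) Nr) real"
    unfolding d by (rule integrable_measure_pmf_finite[OF fin])
  then show "integrable M (\<lambda>\<omega>. real (Nr \<omega>))"
    by (subst (asm) integrable_distr_eq) (auto simp: m)
  have "(\<integral>\<omega>. real (Nr \<omega>) \<partial>M) = (\<integral>x. real x \<partial>distr M (count_space UNIV) Nr)"
    by (rule integral_distr[symmetric]) (auto simp: m)
  also have "\<dots> = p" unfolding d using p by (simp add: integral_bernoulli_pmf)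
  finally show "(\<integral>\<omega>. real (Nr \<omega>) \<partial>M) = p" .
qed

lemma L1_suminf:
  fixes f :: "nat \<Rightarrow> 'a \<Rightarrow> real"
  assumes int: "\<And>i. integrable M (f i)" and summ: "summable (\<lambda>i. \<integral>x. \<bar>f i x\<bar> \<partial>M)"
  shows "AE x in M. summable (\<lambda>i. f i x)"
    and "integrable M (\<lambda>x. \<Sum>i. f i x)"
    and "(\<integral>x. \<bar>\<Sum>i. f i x\<bar> \<partial>M) \<le> (\<Sum>i. \<integral>x. \<bar>f i x\<bar> \<partial>M)"
proof -
  have [measurable]: "f i \<in> borel_measurable M" for i using int[of i] by auto
  have "(\<integral>\<^sup>+x. (\<Sum>i. ennreal \<bar>f i x\<bar>) \<partial>M) = (\<Sum>i. \<integral>\<^sup>+x. ennreal \<bar>f i x\<bar> \<partial>M)"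
    by (rule nn_integral_suminf) auto
  also have "\<dots> = (\<Sum>i. ennreal (\<integral>x. \<bar>f i x\<bar> \<partial>M))"
    by (intro arg_cong[where f=suminf] ext nn_integral_eq_integral integrable_abs int) auto
  also have "\<dots> \<noteq> \<infinity>"
    using summ by (simp add: ennreal_suminf_neq_top)
  finally have "AE x in M. (\<Sum>i. ennreal \<bar>f i x\<bar>) \<noteq> \<infinity>"
    by (intro nn_integral_noteq_infinite) auto
  then have sa: "AE x in M. summable (\<lambda>i. \<bar>f i x\<bar>)"
    by eventually_elim (auto intro: summable_suminf_not_top)
  then show "AE x in M. summable (\<lambda>i. f i x)"
    by eventually_elim (rule summable_rabs_cancel)
  have sa': "AE x in M. summable (\<lambda>i. norm (f i x))" using sa by simp
  have summ': "summable (\<lambda>i. \<integral>x. norm (f i x) \<partial>M)" using summ by simp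
  show "integrable M (\<lambda>x. \<Sum>i. f i x)"
    by (rule integrable_suminf[OF int sa' summ'])
  have ia: "integrable M (\<lambda>x. \<Sum>i. \<bar>f i x\<bar>)"
    using integrable_suminf[of M "\<lambda>i x. \<bar>f i x\<bar>"] int sa summ by auto
  have "(\<integral>x. \<bar>\<Sum>i. f i x\<bar> \<partial>M) \<le> (\<integral>x. (\<Sum>i. \<bar>f i x\<bar>) \<partial>M)"
  proof (rule integral_mono_AE)
    show "integrable M (\<lambda>x. \<bar>\<Sum>i. f i x\<bar>)"
      by (rule integrable_abs, rule integrable_suminf[OF int sa' summ'])
    show "integrable M (\<lambda>x. \<Sum>i. \<bar>f i x\<bar>)" by (rule ia)
    show "AE x in M. \<bar>\<Sum>i. f i x\<bar> \<le> (\<Sum>i. \<bar>f i x\<bar>)"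
      using sa by eventually_elim (rule summable_rabs)
  qed
  also have "\<dots> = (\<Sum>i. \<integral>x. \<bar>f i x\<bar> \<partial>M)"
    using integral_suminf[of M "\<lambda>i x. \<bar>f i x\<bar>"] int sa summ by auto
  finally show "(\<integral>x. \<bar>\<Sum>i. f i x\<bar> \<partial>M) \<le> (\<Sum>i. \<integral>x. \<bar>f i x\<bar> \<partial>M)" .
qed

lemma (in prob_space) abs_mean_le_sqrt:
  fixes X :: "'a \<Rightarrow> real"
  assumes X[measurable]: "X \<in> borel_measurable M" and i2: "integrable M (\<lambda>x. (X x)\<^sup>2)"
  shows "integrable M (\<lambda>x. \<bar>X x\<bar>)" and "(\<integral>x. \<bar>X x\<bar> \<partial>M) \<le> sqrt (\<integral>x. (X x)\<^sup>2 \<partial>M)"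
proof -
  have i1: "integrable M X" by (rule square_integrable_imp_integrable[OF X i2])
  show ia: "integrable M (\<lambda>x. \<bar>X x\<bar>)" using i1 by simp
  define a where "a = (\<integral>x. \<bar>X x\<bar> \<partial>M)"
  have "0 \<le> (\<integral>x. (\<bar>X x\<bar> - a)\<^sup>2 \<partial>M)" by (intro integral_nonneg_AE AE_I2) auto
  also have "(\<integral>x. (\<bar>X x\<bar> - a)\<^sup>2 \<partial>M) = (\<integral>x. (X x)\<^sup>2 - 2 * a * \<bar>X x\<bar> + a\<^sup>2 \<partial>M)"
    by (intro Bochner_Integration.integral_cong refl) (simp add: power2_eq_square algebra_simps)
  also have "\<dots> = (\<integral>x. (X x)\<^sup>2 \<partial>M) - 2 * a * a + a\<^sup>2"
    using i2 ia by (simp add: prob_space a_def)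
  finally have "a\<^sup>2 \<le> (\<integral>x. (X x)\<^sup>2 \<partial>M)" by (simp add: power2_eq_square)
  then show "(\<integral>x. \<bar>X x\<bar> \<partial>M) \<le> sqrt (\<integral>x. (X x)\<^sup>2 \<partial>M)"
    unfolding a_def by (simp add: real_le_rsqrt)
qed

lemma char_transfer:
  fixes M :: "'b measure" and P :: "'a measure"
  assumes X[measurable]: "X \<in> borel_measurable M" and D[measurable]: "D \<in> borel_measurable P"
    and law: "distr M borel X = distr P borel D"
  shows "char (distr M borel (\<lambda>\<omega>. a * (X \<omega> - m))) t = char (distr P borel (\<lambda>x. D x - m)) (a * t)"
proof -
  have "char (distr M borel (\<lambda>\<omega>. a * (X \<omega> - m))) t = (CLINT \<omega>|M. iexp (t * (a * (X \<omega> - m))))"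
    unfolding char_def by (simp add: integral_distr)
  also have "\<dots> = (CLINT x|distr M borel X. iexp (t * (a * (x - m))))"
    by (rule integral_distr[symmetric]) auto
  also have "\<dots> = (CLINT x|distr P borel D. iexp (t * (a * (x - m))))" by (simp only: law)
  also have "\<dots> = (CLINT x|P. iexp (t * (a * (D x - m))))"
    by (rule integral_distr) auto
  also have "\<dots> = char (distr P borel (\<lambda>x. D x - m)) (a * t)"
    unfolding char_def by (simp add: integral_distr mult.commute mult.left_commute mult.assoc)
  finally show ?thesis .
qed

lemma weak_conv_from_char:
  assumes F: "\<And>N. 1 \<le> N \<Longrightarrow> real_distribution (F N)" and nu: "real_distribution \<nu>"
    and ch: "\<And>t. (\<lambda>N. char (F N) t) \<longlonglongrightarrow> char \<nu> t"
  shows "weak_conv_m F \<nu>"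
proof -
  define G where "G N = (if 1 \<le> N then F N else \<nu>)" for N
  have ev: "\<forall>\<^sub>F N in sequentially. G N = F N"
    using eventually_ge_at_top[of 1] by eventually_elim (simp add: G_def)
  have "weak_conv_m G \<nu>"
  proof (rule levy_continuity)
    show "real_distribution (G N)" for N using F nu by (simp add: G_def)
    show "real_distribution \<nu>" by (rule nu)
    fix t
    have "\<forall>\<^sub>F N in sequentially. char (F N) t = char (G N) t"
      using ev by eventually_elim simp
    then show "(\<lambda>N. char (G N) t) \<longlonglongrightarrow> char \<nu> t"
      using ch[of t] by (rule Lim_transform_eventually[rotated])
  qed
  then show ?thesis unfolding weak_conv_m_def weak_conv_def
  proof (intro allI impI)
    fix x assume "\<forall>x. isCont (cdf \<nu>) x \<longrightarrow> (\<lambda>n. cdf (G n) x) \<longlonglongrightarrow> cdf \<nu> x" "isCont (cdf \<nu>) x"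
    then have "(\<lambda>n. cdf (G n) x) \<longlonglongrightarrow> cdf \<nu> x" by blast
    moreover have "\<forall>\<^sub>F N in sequentially. cdf (G N) x = cdf (F N) x"
      using ev by eventually_elim simp
    ultimately show "(\<lambda>n. cdf (F n) x) \<longlonglongrightarrow> cdf \<nu> x"
      by (rule Lim_transform_eventually)
  qed
qed

locale cseq =
  fixes c :: "nat \<Rightarrow> real"
  assumes c_pos: "\<And>l. 0 < c l" and c_anti: "\<And>l. c (Suc l) \<le> c l" and c_lim: "c \<longlonglongrightarrow> 0"
begin

lemma c_dec: "l \<le> l' \<Longrightarrow> c l' \<le> c l"
  using c_anti by (rule decseq_SucI[THEN decseqD]) 

lemma Lvl_ex: "\<exists>l. c l * real N \<le> 1"
proof -
  have "\<forall>\<^sub>F l in sequentially. dist (c l) 0 < 1 / (real N + 1)"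
    by (rule tendstoD[OF c_lim]) simp
  then obtain l where "\<bar>c l\<bar> < 1 / (real N + 1)"
    by (auto simp: eventually_sequentially dist_real_def)
  then have "c l < 1 / (real N + 1)" by simp
  then have "c l * (real N + 1) < 1" by (simp add: field_simps)
  then have "c l * real N \<le> 1" using c_pos[of l] by (simp add: algebra_simps)
  then show ?thesis by blast
qed

lemma Lvl_le: "c (Lvl c N) * real N \<le> 1"
  unfolding Lvl_def by (rule LeastI_ex[OF Lvl_ex])

lemma Lvl_less: "l < Lvl c N \<Longrightarrow> 1 < c l * real N"
  unfolding Lvl_def using not_less_Least by fastforce

lemma Lvl_ge: "Lvl c N \<le> l \<Longrightarrow> c l * real N \<le> 1"
  using Lvl_le[of N] c_dec[of "Lvl c N" l] by (meson mult_right_mono of_nat_0_le_iff order_trans)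

lemma Lvl_ev: "\<forall>\<^sub>F N in sequentially. l < Lvl c N"
proof -
  obtain k :: nat where k: "1 / c l < real k" using reals_Archimedean2 by blast
  show ?thesis using eventually_ge_at_top[of k]
  proof eventually_elim
    case (elim N)
    then have "1 / c l < real N" using k by linarith
    then have "1 < c l * real N" using c_pos[of l] by (simp add: field_simps)
    show ?case
    proof (rule ccontr)
      assume "\<not> l < Lvl c N"
      then have "c l * real N \<le> 1" using Lvl_ge by simp
      with \<open>1 < c l * real N\<close> show False by simp
    qed
  qed
qed

lemma Lvl_filterlim: "filterlim (Lvl c) at_top sequentially"
  unfolding filterlim_at_top
proof
  fix Z show "\<forall>\<^sub>F N in sequentially. Z \<le> Lvl c N"
    using Lvl_ev[of Z] by eventually_elim simp
qed

lemma nsamp_lo: "c l * real N \<le> real (nsamp c N l)"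
  unfolding nsamp_def by (simp add: real_nat_ceiling_ge)

lemma nsamp_hi: "real (nsamp c N l) \<le> c l * real N + 1"
proof -
  have "0 \<le> c l * real N" using c_pos[of l] by simp
  then show ?thesis unfolding nsamp_def
    by (simp add: of_nat_nat)
qed

lemma nsamp_pos: "1 \<le> N \<Longrightarrow> 1 \<le> nsamp c N l"
proof -
  assume "1 \<le> N"
  then have "0 < c l * real N" using c_pos[of l] by simp
  then show ?thesis unfolding nsamp_def by linarith
qed

lemma nsamp_tail: "1 \<le> N \<Longrightarrow> Lvl c N \<le> l \<Longrightarrow> nsamp c N l = 1"
proof -
  assume "1 \<le> N" "Lvl c N \<le> l"
  then have "0 < c l * real N" "c l * real N \<le> 1" using c_pos[of l] Lvl_ge by auto
  then have "\<lceil>c l * real N\<rceil> = 1" by (simp add: ceiling_eq_iff)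
  then show ?thesis unfolding nsamp_def by simp
qed

lemma nsamp_lev_pos: "l < Lvl c N \<Longrightarrow> 1 \<le> nsamp c N l"
proof -
  assume "l < Lvl c N"
  then have "1 < c l * real N" by (rule Lvl_less)
  then show ?thesis unfolding nsamp_def by linarith
qed

lemma lev_setup: "lev_setup c (Lvl c) (nsamp c)"
  by unfold_locales (use nsamp_lev_pos in \<open>auto simp: c_pos Lvl_ev nsamp_lo nsamp_hi\<close>)

end

lemma tail_decay:
  fixes c :: "nat \<Rightarrow> real" and VD phiD phiN cl :: real and Lv :: "nat \<Rightarrow> nat"
  assumes phi: "2 < phiN" "phiN < phiD" and cl: "0 < cl"
    and A2: "\<And>l. cl * phiN powr (- real l) \<le> c l"
    and Lle: "\<And>N. c (Lv N) * real N \<le> 1"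
    and Llim: "filterlim Lv at_top sequentially"
    and VD: "0 \<le> VD"
  shows "(\<lambda>N. sqrt (real N) * (sqrt VD * sqrt (1 / phiD) ^ Lv N / (1 - sqrt (1 / phiD)))) \<longlonglongrightarrow> 0"
proof -
  define q where "q = sqrt (1 / phiD)"
  define \<rho> where "\<rho> = sqrt phiN * q"
  have q1: "q < 1" "0 < q" using phi by (auto simp: q_def)
  have \<rho>: "0 \<le> \<rho>" "\<rho> < 1" using phi by (auto simp: \<rho>_def q_def real_sqrt_mult[symmetric] divide_less_eq)
  define K where "K = sqrt VD / (1 - q) / sqrt cl"
  have K: "0 \<le> K" using q1 VD cl by (simp add: K_def)
  have bound: "\<bar>sqrt (real N) * (sqrt VD * q ^ Lv N / (1 - q))\<bar> \<le> K * \<rho> ^ Lv N" for N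
  proof -
    let ?L = "Lv N"
    have cL: "cl * (1 / phiN) ^ ?L \<le> c ?L"
      using A2[of ?L] phi by (simp add: powr_minus powr_realpow divide_inverse power_inverse)
    have cLp: "0 < cl * (1 / phiN) ^ ?L" using cl phi by simp
    have "real N \<le> 1 / c ?L" using Lle[of N] cLp cL by (simp add: field_simps)
    also have "\<dots> \<le> 1 / (cl * (1 / phiN) ^ ?L)" using cL cLp by (intro divide_left_mono) auto
    also have "\<dots> = phiN ^ ?L / cl" using phi by (simp add: power_one_over field_simps)
    finally have "sqrt (real N) \<le> sqrt (phiN ^ ?L / cl)" by simp
    also have "\<dots> = sqrt phiN ^ ?L / sqrt cl" by (simp add: real_sqrt_divide real_sqrt_power)
    finally have sN: "sqrt (real N) \<le> sqrt phiN ^ ?L / sqrt cl" .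
    have nn: "0 \<le> sqrt VD * q ^ ?L / (1 - q)" using q1 VD by simp
    have "\<bar>sqrt (real N) * (sqrt VD * q ^ ?L / (1 - q))\<bar> = sqrt (real N) * (sqrt VD * q ^ ?L / (1 - q))"
      using nn by (simp only: abs_mult abs_of_nonneg real_sqrt_ge_zero of_nat_0_le_iff)
    also have "\<dots> \<le> sqrt phiN ^ ?L / sqrt cl * (sqrt VD * q ^ ?L / (1 - q))"
      by (rule mult_right_mono[OF sN nn])
    also have "\<dots> = K * \<rho> ^ ?L" by (simp add: K_def \<rho>_def power_mult_distrib mult_ac)
    finally show ?thesis .
  qed
  have "(\<lambda>N. K * \<rho> ^ Lv N) \<longlonglongrightarrow> K * 0"
    by (intro tendsto_mult tendsto_const filterlim_compose[OF LIMSEQ_power_zero Llim]) (use \<rho> in simp)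
  then have "(\<lambda>N. K * \<rho> ^ Lv N) \<longlonglongrightarrow> 0" by simp
  then have "(\<lambda>N. sqrt (real N) * (sqrt VD * q ^ Lv N / (1 - q))) \<longlonglongrightarrow> 0"
    by (rule Lim_null_comparison[rotated]) (use bound in \<open>auto intro: always_eventually\<close>)
  then show ?thesis by (simp add: q_def)
qed

lemma geom_tail_sums:
  fixes q b :: real and L :: nat
  assumes "0 \<le> q" "q < 1"
  shows "(\<lambda>k. b * q ^ (k + L)) sums (b * q ^ L / (1 - q))"
proof -
  have "(\<lambda>k. q ^ k) sums (1 / (1 - q))" using assms by (intro geometric_sums) simp
  then have "(\<lambda>k. (b * q ^ L) * q ^ k) sums ((b * q ^ L) * (1 / (1 - q)))" by (rule sums_mult)
  then show ?thesis by (simp add: power_add mult_ac)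
qed

lemma law_transfer:
  fixes M :: "'b measure" and P :: "'a measure" and g :: "real \<Rightarrow> real"
  assumes X[measurable]: "X \<in> borel_measurable M" and D[measurable]: "D \<in> borel_measurable P"
    and law: "distr M borel X = distr P borel D" and g[measurable]: "g \<in> borel_measurable borel"
  shows "integrable M (\<lambda>\<omega>. g (X \<omega>)) \<longleftrightarrow> integrable P (\<lambda>x. g (D x))"
    and "(\<integral>\<omega>. g (X \<omega>) \<partial>M) = (\<integral>x. g (D x) \<partial>P)"
proof -
  have "integrable M (\<lambda>\<omega>. g (X \<omega>)) \<longleftrightarrow> integrable (distr M borel X) g"
    by (rule integrable_distr_eq[symmetric]) auto
  also have "\<dots> \<longleftrightarrow> integrable (distr P borel D) g" by (simp only: law)
  also have "\<dots> \<longleftrightarrow> integrable P (\<lambda>x. g (D x))"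
    by (rule integrable_distr_eq) auto
  finally show "integrable M (\<lambda>\<omega>. g (X \<omega>)) \<longleftrightarrow> integrable P (\<lambda>x. g (D x))" .
  have "(\<integral>\<omega>. g (X \<omega>) \<partial>M) = (\<integral>x. g x \<partial>distr M borel X)"
    by (rule integral_distr[symmetric]) auto
  also have "\<dots> = (\<integral>x. g x \<partial>distr P borel D)" by (simp only: law)
  also have "\<dots> = (\<integral>x. g (D x) \<partial>P)" by (rule integral_distr) auto
  finally show "(\<integral>\<omega>. g (X \<omega>) \<partial>M) = (\<integral>x. g (D x) \<partial>P)" .
qed

lemma (in prob_space) indep_abs_mult:
  fixes Y Z :: "'a \<Rightarrow> real"
  assumes ind: "indep_var borel Y borel Z" and iY: "integrable M Y" and iZ: "integrable M Z"
  shows "integrable M (\<lambda>\<omega>. \<bar>Y \<omega>\<bar> * Z \<omega>)"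
    and "(\<integral>\<omega>. \<bar>Y \<omega>\<bar> * Z \<omega> \<partial>M) = (\<integral>\<omega>. \<bar>Y \<omega>\<bar> \<partial>M) * (\<integral>\<omega>. Z \<omega> \<partial>M)"
proof -
  have ind': "indep_var borel (abs \<circ> Y) borel (id \<circ> Z)"
    by (rule indep_var_compose[OF ind]) auto
  then have ind2: "indep_var borel (\<lambda>\<omega>. \<bar>Y \<omega>\<bar>) borel Z" by (simp add: comp_def)
  show "integrable M (\<lambda>\<omega>. \<bar>Y \<omega>\<bar> * Z \<omega>)"
    by (rule indep_var_integrable[OF ind2]) (use iY iZ in auto)
  show "(\<integral>\<omega>. \<bar>Y \<omega>\<bar> * Z \<omega> \<partial>M) = (\<integral>\<omega>. \<bar>Y \<omega>\<bar> \<partial>M) * (\<integral>\<omega>. Z \<omega> \<partial>M)"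
    by (rule indep_var_lebesgue_integral[OF ind2]) (use iY iZ in auto)
qed

lemma var_le_sq:
  assumes "prob_space P" and "integrable P D" and "integrable P (\<lambda>x. (D x)\<^sup>2)"
  shows "Var_of P D \<le> (\<integral>x. (D x)\<^sup>2 \<partial>P)" and "0 \<le> Var_of P D"
proof -
  interpret prob_space P by fact
  define a where "a = (\<integral>x. D x \<partial>P)"
  have "Var_of P D = (\<integral>x. (D x)\<^sup>2 - 2 * a * D x + a\<^sup>2 \<partial>P)"
    unfolding Var_of_def a_def[symmetric]
    by (intro Bochner_Integration.integral_cong refl) (simp add: power2_eq_square algebra_simps)
  also have "\<dots> = (\<integral>x. (D x)\<^sup>2 \<partial>P) - 2 * a * a + a\<^sup>2"
    using assms by (simp add: prob_space a_def)
  finally show "Var_of P D \<le> (\<integral>x. (D x)\<^sup>2 \<partial>P)" by (simp add: power2_eq_square)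
  show "0 \<le> Var_of P D" unfolding Var_of_def by (intro integral_nonneg_AE AE_I2) auto
qed

locale ctxD = cseq c
  for c :: "nat \<Rightarrow> real" +
  fixes P :: "'a measure" and D0 :: "'a \<Rightarrow> real" and D :: "nat \<Rightarrow> 'a \<Rightarrow> real"
    and mt :: "nat \<Rightarrow> real" and mu :: real and VD phiD cl cu phiN :: real
  assumes P: "prob_space P"
    and mt_lim: "mt \<longlonglongrightarrow> mu"
    and D0_rv: "D0 \<in> borel_measurable P"
    and D0_int: "integrable P D0" and D0_sq: "integrable P (\<lambda>x. (D0 x)\<^sup>2)"
    and D0_mean: "(\<integral>x. D0 x \<partial>P) = mt 0"
    and D_rv: "\<And>l. D l \<in> borel_measurable P"
    and D_int: "\<And>l. integrable P (D l)" and D_sq: "\<And>l. integrable P (\<lambda>x. (D l x)\<^sup>2)"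
    and D_mean: "\<And>l. (\<integral>x. D l x \<partial>P) = mt (Suc l) - mt l"
    and D_mom: "\<And>l. (\<integral>x. (D l x)\<^sup>2 \<partial>P) \<le> VD * phiD powr (- real l)"
    and VD: "VD > 0" and phiD: "phiD > 2"
    and A2: "\<And>l. cl * phiN powr (- real l) \<le> c l \<and> c l \<le> cu * phiN powr (- real l)"
    and cl: "0 < cl" "cl \<le> cu" and phiN: "2 < phiN" "phiN < phiD"
begin

definition "q = sqrt (1 / phiD)"
definition "B l = sqrt VD * q ^ l"
definition "m l = mt (Suc l) - mt l"
definition "mu0 = distr P borel (\<lambda>x. D0 x - mt 0)"
definition "mul l = distr P borel (\<lambda>x. D l x - m l)"
definition "vv l = Var_of P (D l)"
definition "sig2 = Var_of P D0 + (\<Sum>l. vv l / c l)"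
definition "Tl L = sqrt VD * q ^ L / (1 - q)"

lemma q: "0 < q" "q < 1" using phiD by (auto simp: q_def)

lemma B_nn: "0 \<le> B l" using q VD by (simp add: B_def)

lemma absD: "integrable P (\<lambda>x. \<bar>D l x\<bar>)" "(\<integral>x. \<bar>D l x\<bar> \<partial>P) \<le> B l"
proof -
  interpret prob_space P by (rule P)
  show "integrable P (\<lambda>x. \<bar>D l x\<bar>)" by (rule abs_mean_le_sqrt(1)[OF D_rv D_sq])
  have "(\<integral>x. \<bar>D l x\<bar> \<partial>P) \<le> sqrt (\<integral>x. (D l x)\<^sup>2 \<partial>P)" by (rule abs_mean_le_sqrt(2)[OF D_rv D_sq])
  also have "\<dots> \<le> sqrt (VD * phiD powr (- real l))" using D_mom[of l] by simp
  also have "VD * phiD powr (- real l) = VD * (1 / phiD) ^ l"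
    using phiD by (simp add: powr_minus powr_realpow power_one_over divide_inverse power_inverse)
  also have "sqrt \<dots> = B l" by (simp add: B_def q_def real_sqrt_mult real_sqrt_power)
  finally show "(\<integral>x. \<bar>D l x\<bar> \<partial>P) \<le> B l" .
qed

lemma abs_m: "\<bar>m l\<bar> \<le> B l"
proof -
  have "\<bar>m l\<bar> = \<bar>\<integral>x. D l x \<partial>P\<bar>" by (simp add: m_def D_mean)
  also have "\<dots> \<le> (\<integral>x. \<bar>D l x\<bar> \<partial>P)" by (rule integral_abs_bound)
  also have "\<dots> \<le> B l" by (rule absD)
  finally show ?thesis .
qed

lemma B_tail_sums: "(\<lambda>k. B (k + L)) sums Tl L"
  unfolding B_def Tl_def using geom_tail_sums[of q "sqrt VD" L] q by simp

lemma B_le_Tl: "B L \<le> Tl L"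
proof -
  have "B (0 + L) \<le> Tl L"
    using sum_le_suminf[of "\<lambda>k. B (k + L)" "{0}"] B_tail_sums B_nn by (auto simp: sums_iff)
  then show ?thesis by simp
qed

lemma Tl_nn: "0 \<le> Tl L" using q VD by (simp add: Tl_def)

lemma m_tail_sums: "(\<lambda>k. m (k + L)) sums (mu - mt L)"
proof -
  have "(\<lambda>n. \<Sum>k<n. m (k + L)) = (\<lambda>n. mt (n + L) - mt L)"
  proof
    fix n show "(\<Sum>k<n. m (k + L)) = mt (n + L) - mt L"
      by (induction n) (simp_all add: m_def)
  qed
  moreover have "(\<lambda>n. mt (n + L) - mt L) \<longlonglongrightarrow> mu - mt L"
    by (intro tendsto_diff tendsto_const) (rule LIMSEQ_ignore_initial_segment[OF mt_lim])
  ultimately show ?thesis unfolding sums_def by simp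
qed

lemma mu_tail: "\<bar>mu - mt L\<bar> \<le> Tl L"
proof -
  have s1: "summable (\<lambda>k. B (k + L))" using B_tail_sums by (rule sums_summable)
  have s2: "summable (\<lambda>k. \<bar>m (k + L)\<bar>)"
    by (rule summable_comparison_test[OF _ s1]) (use abs_m in simp)
  have "\<bar>mu - mt L\<bar> = \<bar>\<Sum>k. m (k + L)\<bar>" using m_tail_sums by (simp add: sums_iff)
  also have "\<dots> \<le> (\<Sum>k. \<bar>m (k + L)\<bar>)" by (rule summable_rabs[OF s2])
  also have "\<dots> \<le> (\<Sum>k. B (k + L))" by (rule suminf_le[OF _ s2 s1]) (use abs_m in simp)
  also have "\<dots> = Tl L" using B_tail_sums by (simp add: sums_iff)
  finally show ?thesis .
qed

lemma m_telescope: "(\<Sum>l<L. m l) = mt L - mt 0"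
  by (induction L) (simp_all add: m_def)

lemma vv_nn: "0 \<le> vv l" unfolding vv_def by (rule var_le_sq(2)[OF P D_int D_sq])

lemma summable_vc: "summable (\<lambda>l. vv l / c l)"
proof -
  define r where "r = phiN / phiD"
  have r: "0 \<le> r" "r < 1" using phiN by (auto simp: r_def)
  have "summable (\<lambda>l. VD / cl * r ^ l)" using r by (intro summable_mult summable_geometric) simp
  then show ?thesis
  proof (rule summable_comparison_test[rotated], intro exI allI impI)
    fix l :: nat
    have cpos: "0 < c l" by (rule c_pos)
    have "vv l \<le> VD * phiD powr (- real l)"
      unfolding vv_def using var_le_sq(1)[OF P D_int D_sq, of l] D_mom[of l] by linarith
    also have "\<dots> = VD * (1 / phiD) ^ l" using phiD by (simp add: powr_minus powr_realpow power_one_over divide_inverse power_inverse)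
    finally have v1: "vv l \<le> VD * (1 / phiD) ^ l" .
    have c1: "cl * (1 / phiN) ^ l \<le> c l"
      using A2[of l] phiN by (simp add: powr_minus powr_realpow power_one_over divide_inverse power_inverse)
    have c1p: "0 < cl * (1 / phiN) ^ l" using cl phiN by simp
    have "vv l / c l \<le> VD * (1 / phiD) ^ l / c l" using v1 cpos by (simp add: divide_right_mono)
    also have "\<dots> \<le> VD * (1 / phiD) ^ l / (cl * (1 / phiN) ^ l)"
      using c1 c1p VD phiD by (intro divide_left_mono) auto
    also have "\<dots> = VD / cl * r ^ l" using phiN phiD cl by (simp add: r_def power_divide field_simps)
    finally show "norm (vv l / c l) \<le> VD / cl * r ^ l" using vv_nn[of l] cpos by simp
  qed
qed

lemma mu0_facts: "real_distribution mu0" "integrable mu0 (\<lambda>x. x)" "integrable mu0 (\<lambda>x. x\<^sup>2)"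
    "(\<integral>x. x \<partial>mu0) = 0" "(\<integral>x. x\<^sup>2 \<partial>mu0) = Var_of P D0"
proof -
  interpret prob_space P by (rule P)
  have [measurable]: "D0 \<in> borel_measurable P" by (rule D0_rv)
  show "real_distribution mu0" unfolding mu0_def by (rule real_distribution_distr) simp
  show "integrable mu0 (\<lambda>x. x)" unfolding mu0_def using D0_int
    by (subst integrable_distr_eq) auto
  show "integrable mu0 (\<lambda>x. x\<^sup>2)" unfolding mu0_def using D0_int D0_sq
    by (subst integrable_distr_eq) (auto simp: power2_diff intro!: Bochner_Integration.integrable_diff Bochner_Integration.integrable_add)
  show "(\<integral>x. x \<partial>mu0) = 0" unfolding mu0_def using D0_int D0_mean
    by (subst integral_distr) (auto simp: prob_space)
  show "(\<integral>x. x\<^sup>2 \<partial>mu0) = Var_of P D0" unfolding mu0_def Var_of_def D0_mean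
    by (subst integral_distr) auto
qed

lemma mul_facts: "real_distribution (mul l)" "integrable (mul l) (\<lambda>x. x)" "integrable (mul l) (\<lambda>x. x\<^sup>2)"
    "(\<integral>x. x \<partial>mul l) = 0" "vv l = (\<integral>x. x\<^sup>2 \<partial>mul l)"
proof -
  interpret prob_space P by (rule P)
  have [measurable]: "D l \<in> borel_measurable P" by (rule D_rv)
  show "real_distribution (mul l)" unfolding mul_def by (rule real_distribution_distr) simp
  show "integrable (mul l) (\<lambda>x. x)" unfolding mul_def using D_int[of l]
    by (subst integrable_distr_eq) auto
  show "integrable (mul l) (\<lambda>x. x\<^sup>2)" unfolding mul_def using D_int[of l] D_sq[of l]
    by (subst integrable_distr_eq) (auto simp: power2_diff intro!: Bochner_Integration.integrable_diff Bochner_Integration.integrable_add)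
  show "(\<integral>x. x \<partial>mul l) = 0" unfolding mul_def using D_int[of l] D_mean[of l]
    by (subst integral_distr) (auto simp: prob_space m_def)
  show "vv l = (\<integral>x. x\<^sup>2 \<partial>mul l)" unfolding mul_def vv_def Var_of_def D_mean m_def
    by (subst integral_distr) auto
qed

definition "Phi N t = char mu0 (t / sqrt (real N)) ^ N *
   (\<Prod>l<Lvl c N. char (mul l) (t * sqrt (real N) / real (nsamp c N l)) ^ nsamp c N l)"

lemma Phi_lim: "(\<lambda>N. Phi N t) \<longlonglongrightarrow> char (normal_law 0 sig2) t"
proof -
  interpret lev_setup c "Lvl c" "nsamp c" by (rule lev_setup)
  have s0: "0 \<le> sig2" unfolding sig2_def
    using var_le_sq(2)[OF P D0_int D0_sq] summable_vc vv_nn c_pos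
    by (intro add_nonneg_nonneg suminf_nonneg) (auto intro: divide_nonneg_pos)
  have "(\<lambda>N. Phi N t) \<longlonglongrightarrow> complex_of_real (exp (- ((Var_of P D0 + (\<Sum>l. vv l / c l)) * t\<^sup>2 / 2)))"
    unfolding Phi_def
    by (rule Phi_limit[OF mu0_facts mul_facts summable_vc])
  then show ?thesis using char_normal_law[OF s0, of t] by (simp add: sig2_def)
qed

end

locale ctxS = ctxD c P D0 D mt mu VD phiD cl cu phiN
  for c :: "nat \<Rightarrow> real" and P :: "'a measure" and D0 D mt mu VD phiD cl cu phiN +
  fixes M :: "nat \<Rightarrow> 'b measure" and X0 :: "nat \<Rightarrow> nat \<Rightarrow> 'b \<Rightarrow> real"
    and Nr :: "nat \<Rightarrow> nat \<Rightarrow> 'b \<Rightarrow> nat" and Y :: "nat \<Rightarrow> nat \<Rightarrow> nat \<Rightarrow> 'b \<Rightarrow> real"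
  assumes M_prob: "\<And>N. N \<ge> 1 \<Longrightarrow> prob_space (M N)"
    and X0_law: "\<And>N r. N \<ge> 1 \<Longrightarrow> r \<in> {1..N} \<Longrightarrow>
        X0 N r \<in> borel_measurable (M N) \<and> distr (M N) borel (X0 N r) = distr P borel D0"
    and X0_indep: "\<And>N. N \<ge> 1 \<Longrightarrow> prob_space.indep_vars (M N) (\<lambda>_. borel) (X0 N) {1..N}"
    and Nr_rv: "\<And>N l. N \<ge> 1 \<Longrightarrow> Nr N l \<in> measurable (M N) (count_space UNIV)"
    and Nr_det: "\<And>N l \<omega>. N \<ge> 1 \<Longrightarrow> l \<le> Lvl c N \<Longrightarrow> \<omega> \<in> space (M N) \<Longrightarrow>
        Nr N l \<omega> = nsamp c N l"
    and Nr_bern: "\<And>N l. N \<ge> 1 \<Longrightarrow> Lvl c N < l \<Longrightarrow>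
        distr (M N) (count_space UNIV) (Nr N l)
          = measure_pmf (map_pmf (\<lambda>b. if b then 1 else 0) (bernoulli_pmf (c l * real N)))"
    and Y_law: "\<And>N l r. N \<ge> 1 \<Longrightarrow> r \<in> {1..nsamp c N l} \<Longrightarrow>
        Y N l r \<in> borel_measurable (M N) \<and> distr (M N) borel (Y N l r) = distr P borel (D l)"
    and Y_indep: "\<And>N l. N \<ge> 1 \<Longrightarrow> l < Lvl c N \<Longrightarrow>
        prob_space.indep_vars (M N) (\<lambda>_. borel) (Y N l) {1..nsamp c N l}"
    and NY_indep: "\<And>N l. N \<ge> 1 \<Longrightarrow> Lvl c N < l \<Longrightarrow>
        prob_space.indep_var (M N) borel (Y N l 1) borel (\<lambda>\<omega>. real (Nr N l \<omega>))"
    and S_indep: "\<And>N. N \<ge> 1 \<Longrightarrow> prob_space.indep_vars (M N) (\<lambda>_. borel)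
        (\<lambda>i. case i of None \<Rightarrow> S0_est N (X0 N) | Some l \<Rightarrow> Slev (M N) (Nr N) (Y N) l) UNIV"
begin

lemma S_tail_term:
  assumes N1: "1 \<le> N" and l: "Lvl c N \<le> l"
  shows "integrable (M N) (Slev (M N) (Nr N) (Y N) l)"
    and "(\<integral>\<omega>. \<bar>Slev (M N) (Nr N) (Y N) l \<omega>\<bar> \<partial>M N) \<le> B l"
proof -
  interpret MN: prob_space "M N" by (rule M_prob[OF N1])
  let ?S = "Slev (M N) (Nr N) (Y N) l"
  have Sm[measurable]: "?S \<in> borel_measurable (M N)"
  proof -
    have "\<forall>i\<in>UNIV. (case i of None \<Rightarrow> S0_est N (X0 N) | Some l \<Rightarrow> Slev (M N) (Nr N) (Y N) l) \<in> borel_measurable (M N)"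
      using S_indep[OF N1] unfolding MN.indep_vars_def2 by blast
    from bspec[OF this UNIV_I, of "Some l"] show ?thesis by simp
  qed
  have ns1: "nsamp c N l = 1" by (rule nsamp_tail[OF N1 l])
  have Ylaw: "Y N l 1 \<in> borel_measurable (M N)" "distr (M N) borel (Y N l 1) = distr P borel (D l)"
    using Y_law[OF N1, of 1 l] ns1 by auto
  have [measurable]: "Y N l 1 \<in> borel_measurable (M N)" by (rule Ylaw(1))
  have [measurable]: "Y N l (Suc 0) \<in> borel_measurable (M N)" using Ylaw(1) by simp
  have [measurable]: "D l \<in> borel_measurable P" by (rule D_rv)
  have iY: "integrable (M N) (Y N l 1)"
    using law_transfer(1)[OF Ylaw(1) D_rv Ylaw(2), of "\<lambda>x. x"] D_int[of l] by simp
  have aY: "(\<integral>\<omega>. \<bar>Y N l 1 \<omega>\<bar> \<partial>M N) = (\<integral>x. \<bar>D l x\<bar> \<partial>P)"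
    using law_transfer(2)[OF Ylaw(1) D_rv Ylaw(2), of abs] by simp
  have main: "integrable (M N) ?S \<and> (\<integral>\<omega>. \<bar>?S \<omega>\<bar> \<partial>M N) \<le> B l"
  proof (cases "l = Lvl c N")
    case True
    have Nr1: "\<And>\<omega>. \<omega> \<in> space (M N) \<Longrightarrow> Nr N l \<omega> = 1"
      using Nr_det[OF N1] True ns1 by simp
    have "(\<integral>\<omega>. real (Nr N l \<omega>) \<partial>M N) = (\<integral>\<omega>. 1 \<partial>M N)"
      by (rule Bochner_Integration.integral_cong) (auto simp: Nr1)
    then have EN: "(\<integral>\<omega>. real (Nr N l \<omega>) \<partial>M N) = 1" by (simp add: MN.prob_space)
    have Seq: "\<And>\<omega>. \<omega> \<in> space (M N) \<Longrightarrow> ?S \<omega> = Y N l 1 \<omega>"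
      by (simp add: Slev_def EN Nr1)
    have "integrable (M N) ?S \<longleftrightarrow> integrable (M N) (Y N l 1)"
      by (rule Bochner_Integration.integrable_cong) (auto simp: Seq)
    then have i: "integrable (M N) ?S" using iY by simp
    have "(\<integral>\<omega>. \<bar>?S \<omega>\<bar> \<partial>M N) = (\<integral>\<omega>. \<bar>Y N l 1 \<omega>\<bar> \<partial>M N)"
      by (rule Bochner_Integration.integral_cong) (auto simp: Seq)
    also have "\<dots> \<le> B l" using aY absD(2)[of l] by simp
    finally show ?thesis using i by simp
  next
    case False
    then have lL: "Lvl c N < l" using l by simp
    define p where "p = c l * real N"
    have p: "0 < p" "p \<le> 1" using c_pos[of l] N1 Lvl_ge[OF l] by (auto simp: p_def)
    note bf = MN.bern_facts[OF Nr_rv[OF N1] Nr_bern[OF N1 lL, folded p_def] less_imp_le[OF p(1)] p(2)]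
    have EN: "(\<integral>\<omega>. real (Nr N l \<omega>) \<partial>M N) = p" by (rule bf(3))
    have Zm[measurable]: "(\<lambda>\<omega>. real (Nr N l \<omega>)) \<in> borel_measurable (M N)" using bf(2) by auto
    have ind: "MN.indep_var borel (Y N l 1) borel (\<lambda>\<omega>. real (Nr N l \<omega>))" by (rule NY_indep[OF N1 lL])
    have iYZ: "integrable (M N) (\<lambda>\<omega>. Y N l 1 \<omega> * real (Nr N l \<omega>))"
      by (rule MN.indep_var_integrable[OF ind iY bf(2)])
    have AEeq: "AE \<omega> in M N. ?S \<omega> = Y N l 1 \<omega> * real (Nr N l \<omega>) / p"
      using bf(1) by eventually_elim (auto simp: Slev_def EN)
    have i: "integrable (M N) ?S"
    proof -
      have "integrable (M N) (\<lambda>\<omega>. Y N l 1 \<omega> * real (Nr N l \<omega>) / p)"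
        using iYZ by simp
      moreover have "integrable (M N) ?S \<longleftrightarrow> integrable (M N) (\<lambda>\<omega>. Y N l 1 \<omega> * real (Nr N l \<omega>) / p)"
      proof -
        have "(\<lambda>\<omega>. Y N l 1 \<omega> * real (Nr N l \<omega>) / p) \<in> borel_measurable (M N)" by measurable
        then show ?thesis by (rule integrable_cong_AE[OF Sm _ AEeq])
      qed
      ultimately show ?thesis by simp
    qed
    have "(\<integral>\<omega>. \<bar>?S \<omega>\<bar> \<partial>M N) = (\<integral>\<omega>. \<bar>Y N l 1 \<omega>\<bar> * real (Nr N l \<omega>) / p \<partial>M N)"
    proof (rule integral_cong_AE)
      show "AE \<omega> in M N. \<bar>?S \<omega>\<bar> = \<bar>Y N l 1 \<omega>\<bar> * real (Nr N l \<omega>) / p"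
        using AEeq by eventually_elim (use p in \<open>simp add: abs_mult\<close>)
    qed auto
    also have "\<dots> = (\<integral>\<omega>. \<bar>Y N l 1 \<omega>\<bar> * real (Nr N l \<omega>) \<partial>M N) / p" by simp
    also have "\<dots> = (\<integral>\<omega>. \<bar>Y N l 1 \<omega>\<bar> \<partial>M N)"
      using MN.indep_abs_mult(2)[OF ind iY bf(2)] EN p by simp
    also have "\<dots> \<le> B l" using aY absD(2)[of l] by simp
    finally show ?thesis using i by simp
  qed
  then show "integrable (M N) ?S" by simp
  show "(\<integral>\<omega>. \<bar>?S \<omega>\<bar> \<partial>M N) \<le> B l" using main by simp
qed

end

lemma (in prob_space) char_sum_iid_affine:
  fixes X :: "'i \<Rightarrow> 'a \<Rightarrow> real" and P :: "'c measure"
  assumes ind: "indep_vars (\<lambda>_. borel) X I" and fin: "finite I"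
    and law: "\<And>r. r \<in> I \<Longrightarrow> X r \<in> borel_measurable M \<and> distr M borel (X r) = distr P borel Dd"
    and Dd: "Dd \<in> borel_measurable P"
  shows "char (distr M borel (\<lambda>\<omega>. \<Sum>r\<in>I. a * (X r \<omega> - mm))) t = char (distr P borel (\<lambda>x. Dd x - mm)) (a * t) ^ card I"
proof -
  have ind2: "indep_vars (\<lambda>_. borel) (\<lambda>r \<omega>. a * (X r \<omega> - mm)) I"
    by (rule indep_vars_compose2[OF ind, where Y="\<lambda>r x. a * (x - mm)"]) simp
  have "char (distr M borel (\<lambda>\<omega>. \<Sum>r\<in>I. a * (X r \<omega> - mm))) t = (\<Prod>r\<in>I. char (distr M borel (\<lambda>\<omega>. a * (X r \<omega> - mm))) t)"
    by (rule char_distr_sum[OF ind2])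
  also have "\<dots> = (\<Prod>r\<in>I. char (distr P borel (\<lambda>x. Dd x - mm)) (a * t))"
  proof (rule prod.cong[OF refl])
    fix r assume r: "r \<in> I"
    show "char (distr M borel (\<lambda>\<omega>. a * (X r \<omega> - mm))) t = char (distr P borel (\<lambda>x. Dd x - mm)) (a * t)"
      using law[OF r] by (intro char_transfer Dd) auto
  qed
  also have "\<dots> = char (distr P borel (\<lambda>x. Dd x - mm)) (a * t) ^ card I" by simp
  finally show ?thesis .
qed

context ctxS begin

definition "AS N \<omega> = sqrt (real N) * (S0_est N (X0 N) \<omega> - mt 0)
   + (\<Sum>l<Lvl c N. sqrt (real N) * (Slev (M N) (Nr N) (Y N) l \<omega> - m l))"

lemma S_meas:
  assumes N1: "1 \<le> N"
  shows "S0_est N (X0 N) \<in> borel_measurable (M N)" "\<And>l. Slev (M N) (Nr N) (Y N) l \<in> borel_measurable (M N)"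
proof -
  interpret MN: prob_space "M N" by (rule M_prob[OF N1])
  have *: "\<forall>i\<in>UNIV. (case i of None \<Rightarrow> S0_est N (X0 N) | Some l \<Rightarrow> Slev (M N) (Nr N) (Y N) l) \<in> borel_measurable (M N)"
    using S_indep[OF N1] unfolding MN.indep_vars_def2 by blast
  from bspec[OF * UNIV_I, of None] show "S0_est N (X0 N) \<in> borel_measurable (M N)" by simp
  fix l from bspec[OF * UNIV_I, of "Some l"] show "Slev (M N) (Nr N) (Y N) l \<in> borel_measurable (M N)" by simp
qed

lemma S_char:
  assumes N1: "1 \<le> N"
  shows "char (distr (M N) borel (AS N)) t = Phi N t"
proof -
  interpret MN: prob_space "M N" by (rule M_prob[OF N1])
  let ?L = "Lvl c N"
  define mm where "mm i = (case i of None \<Rightarrow> mt 0 | Some l \<Rightarrow> m l)" for i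
  define SS where "SS i = (case i of None \<Rightarrow> S0_est N (X0 N) | Some l \<Rightarrow> Slev (M N) (Nr N) (Y N) l)" for i
  define Gf where "Gf i \<omega> = sqrt (real N) * (SS i \<omega> - mm i)" for i \<omega>
  have indG: "MN.indep_vars (\<lambda>_. borel) Gf UNIV"
    unfolding Gf_def
    by (rule MN.indep_vars_compose2[OF S_indep[OF N1, folded SS_def], where Y="\<lambda>i x. sqrt (real N) * (x - mm i)"]) simp
  define I where "I = insert None (Some ` {..<?L})"
  have fI: "finite I" by (simp add: I_def)
  have AS_eq: "AS N = (\<lambda>\<omega>. \<Sum>i\<in>I. Gf i \<omega>)"
    by (rule ext) (simp add: AS_def I_def Gf_def SS_def mm_def sum.reindex)
  have "char (distr (M N) borel (AS N)) t = (\<Prod>i\<in>I. char (distr (M N) borel (Gf i)) t)"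
    unfolding AS_eq by (rule MN.char_distr_sum[OF MN.indep_vars_subset[OF indG]]) simp
  also have "\<dots> = char (distr (M N) borel (Gf None)) t * (\<Prod>l<?L. char (distr (M N) borel (Gf (Some l))) t)"
    by (simp add: I_def prod.reindex)
  also have "char (distr (M N) borel (Gf None)) t = char mu0 (t / sqrt (real N)) ^ N"
  proof -
    have eq: "Gf None = (\<lambda>\<omega>. \<Sum>r\<in>{1..N}. (1 / sqrt (real N)) * (X0 N r \<omega> - mt 0))"
    proof
      fix \<omega>
      define s where "s = sqrt (real N)"
      have s: "0 < s" "real N = s * s" using N1 by (auto simp: s_def)
      have "(\<Sum>r\<in>{1..N}. (1 / s) * (X0 N r \<omega> - mt 0)) = (1 / s) * ((\<Sum>r\<in>{1..N}. X0 N r \<omega>) - real N * mt 0)"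
        by (simp add: sum_distrib_left[symmetric] sum_divide_distrib[symmetric] sum_subtractf)
      also have "\<dots> = s * ((\<Sum>r\<in>{1..N}. X0 N r \<omega>) / real N - mt 0)"
        using s by (simp add: field_simps)
      finally show "Gf None \<omega> = (\<Sum>r\<in>{1..N}. (1 / sqrt (real N)) * (X0 N r \<omega> - mt 0))"
        by (simp add: Gf_def SS_def mm_def S0_est_def s_def)
    qed
    have "char (distr (M N) borel (Gf None)) t = char (distr P borel (\<lambda>x. D0 x - mt 0)) (1 / sqrt (real N) * t) ^ card {1..N}"
      unfolding eq by (rule MN.char_sum_iid_affine[OF X0_indep[OF N1] _ X0_law[OF N1] D0_rv]) simp_all
    then show ?thesis by (simp add: mu0_def)
  qed
  also have "(\<Prod>l<?L. char (distr (M N) borel (Gf (Some l))) t) =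
      (\<Prod>l<?L. char (mul l) (t * sqrt (real N) / real (nsamp c N l)) ^ nsamp c N l)"
  proof (rule prod.cong[OF refl])
    fix l assume "l \<in> {..<?L}"
    then have lL: "l < ?L" by simp
    let ?n = "nsamp c N l"
    have n1: "1 \<le> ?n" by (rule nsamp_pos[OF N1])
    have Nrn: "\<And>\<omega>. \<omega> \<in> space (M N) \<Longrightarrow> Nr N l \<omega> = ?n" using Nr_det[OF N1] lL by simp
    have "(\<integral>\<omega>. real (Nr N l \<omega>) \<partial>M N) = (\<integral>\<omega>. real ?n \<partial>M N)"
      by (rule Bochner_Integration.integral_cong) (auto simp: Nrn)
    then have EN: "(\<integral>\<omega>. real (Nr N l \<omega>) \<partial>M N) = real ?n" by (simp add: MN.prob_space)
    have "distr (M N) borel (Gf (Some l)) = distr (M N) borel (\<lambda>\<omega>. \<Sum>r\<in>{1..?n}. (sqrt (real N) / real ?n) * (Y N l r \<omega> - m l))"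
    proof (rule distr_cong[OF refl refl])
      fix \<omega> assume \<omega>: "\<omega> \<in> space (M N)"
      have np: "0 < real ?n" using n1 by simp
      have "(\<Sum>r\<in>{1..?n}. (sqrt (real N) / real ?n) * (Y N l r \<omega> - m l))
          = (sqrt (real N) / real ?n) * ((\<Sum>r\<in>{1..?n}. Y N l r \<omega>) - real ?n * m l)"
        by (simp add: sum_distrib_left[symmetric] sum_divide_distrib[symmetric] sum_subtractf)
      also have "\<dots> = sqrt (real N) * ((\<Sum>r\<in>{1..?n}. Y N l r \<omega>) / real ?n - m l)"
        using np by (simp add: field_simps)
      finally show "Gf (Some l) \<omega> = (\<Sum>r\<in>{1..?n}. (sqrt (real N) / real ?n) * (Y N l r \<omega> - m l))"
        by (simp add: Gf_def SS_def mm_def Slev_def EN Nrn[OF \<omega>])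
    qed
    then have "char (distr (M N) borel (Gf (Some l))) t = char (distr (M N) borel (\<lambda>\<omega>. \<Sum>r\<in>{1..?n}. (sqrt (real N) / real ?n) * (Y N l r \<omega> - m l))) t"
      by simp
    also have "\<dots> = char (distr P borel (\<lambda>x. D l x - m l)) (sqrt (real N) / real ?n * t) ^ card {1..?n}"
      by (rule MN.char_sum_iid_affine[OF Y_indep[OF N1 lL] _ Y_law[OF N1] D_rv]) simp_all
    also have "\<dots> = char (mul l) (t * sqrt (real N) / real ?n) ^ ?n"
      by (simp add: mul_def mult.commute)
    finally show "char (distr (M N) borel (Gf (Some l))) t = char (mul l) (t * sqrt (real N) / real ?n) ^ ?n" .
  qed
  finally show ?thesis by (simp add: Phi_def)
qed

end

context ctxD begin

lemma tail_L1:
  fixes M :: "'b measure" and f :: "nat \<Rightarrow> 'b \<Rightarrow> real" and L :: nat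
  assumes pM: "prob_space M" and int: "\<And>k. integrable M (f k)" and bd: "\<And>k. (\<integral>\<omega>. \<bar>f k \<omega>\<bar> \<partial>M) \<le> B (k + L)"
  shows "AE \<omega> in M. summable (\<lambda>k. f k \<omega>)"
    and "integrable M (\<lambda>\<omega>. \<Sum>k. f k \<omega>)"
    and "(\<integral>\<omega>. \<bar>\<Sum>k. f k \<omega>\<bar> \<partial>M) \<le> Tl L"
proof -
  have sB: "summable (\<lambda>k. B (k + L))" using B_tail_sums by (rule sums_summable)
  have s: "summable (\<lambda>k. \<integral>\<omega>. \<bar>f k \<omega>\<bar> \<partial>M)"
    by (rule summable_comparison_test[OF _ sB]) (use bd in \<open>auto intro!: exI[of _ 0]\<close>)
  note L = L1_suminf[OF int s]
  show "AE \<omega> in M. summable (\<lambda>k. f k \<omega>)" by (rule L(1))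
  show "integrable M (\<lambda>\<omega>. \<Sum>k. f k \<omega>)" by (rule L(2))
  have "(\<integral>\<omega>. \<bar>\<Sum>k. f k \<omega>\<bar> \<partial>M) \<le> (\<Sum>k. \<integral>\<omega>. \<bar>f k \<omega>\<bar> \<partial>M)" by (rule L(3))
  also have "\<dots> \<le> (\<Sum>k. B (k + L))" by (rule suminf_le[OF bd s sB])
  also have "\<dots> = Tl L" using B_tail_sums by (simp add: sums_iff)
  finally show "(\<integral>\<omega>. \<bar>\<Sum>k. f k \<omega>\<bar> \<partial>M) \<le> Tl L" .
qed

end

context ctxS begin

definition "XS N \<omega> = sqrt (real N) * (S_est (M N) N (X0 N) (Nr N) (Y N) \<omega> - mu)"

lemma S_bound:
  assumes N1: "1 \<le> N"
  shows "XS N \<in> borel_measurable (M N)" "AS N \<in> borel_measurable (M N)"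
    "integrable (M N) (\<lambda>\<omega>. XS N \<omega> - AS N \<omega>)"
    "(\<integral>\<omega>. \<bar>XS N \<omega> - AS N \<omega>\<bar> \<partial>M N) \<le> sqrt (real N) * (2 * Tl (Lvl c N))"
proof -
  interpret MN: prob_space "M N" by (rule M_prob[OF N1])
  let ?L = "Lvl c N"
  let ?Sl = "Slev (M N) (Nr N) (Y N)"
  let ?S0 = "S0_est N (X0 N)"
  have [measurable]: "?S0 \<in> borel_measurable (M N)" "\<And>l. ?Sl l \<in> borel_measurable (M N)"
    by (rule S_meas[OF N1])+
  show XSm[measurable]: "XS N \<in> borel_measurable (M N)"
    unfolding XS_def[abs_def] S_est_def[abs_def] by measurable
  show ASm[measurable]: "AS N \<in> borel_measurable (M N)"
    unfolding AS_def[abs_def] by measurable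
  define f where "f k = ?Sl (k + ?L)" for k
  have fi: "integrable (M N) (f k)" for k unfolding f_def by (rule S_tail_term(1)[OF N1]) simp
  have fb: "(\<integral>\<omega>. \<bar>f k \<omega>\<bar> \<partial>M N) \<le> B (k + ?L)" for k unfolding f_def by (rule S_tail_term(2)[OF N1]) simp
  note T = tail_L1[OF MN.prob_space_axioms fi fb]
  define C where "C = mu - mt ?L"
  define g where "g \<omega> = sqrt (real N) * ((\<Sum>k. f k \<omega>) - C)" for \<omega>
  have gi: "integrable (M N) g" unfolding g_def using T(2) by simp
  have [measurable]: "g \<in> borel_measurable (M N)" using gi by auto
  have AEeq: "AE \<omega> in M N. XS N \<omega> - AS N \<omega> = g \<omega>"
    using T(1)
  proof eventually_elim
    case (elim \<omega>)
    then have sf: "summable (\<lambda>l. ?Sl l \<omega>)"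
      unfolding f_def by (subst summable_iff_shift[symmetric, of _ ?L]) simp
    have split: "(\<Sum>l. ?Sl l \<omega>) = (\<Sum>k. f k \<omega>) + (\<Sum>l<?L. ?Sl l \<omega>)"
      unfolding f_def by (rule suminf_split_initial_segment[OF sf])
    have "AS N \<omega> = sqrt (real N) * (?S0 \<omega> - mt 0 + (\<Sum>l<?L. ?Sl l \<omega>) - (\<Sum>l<?L. m l))"
      by (simp add: AS_def sum_distrib_left[symmetric] sum_subtractf algebra_simps)
    then show ?case
      by (simp add: XS_def S_est_def g_def C_def split m_telescope algebra_simps)
  qed
  have "integrable (M N) (\<lambda>\<omega>. XS N \<omega> - AS N \<omega>) \<longleftrightarrow> integrable (M N) g"
    by (rule integrable_cong_AE) (use AEeq in auto)
  then show "integrable (M N) (\<lambda>\<omega>. XS N \<omega> - AS N \<omega>)" using gi by simp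
  have "(\<integral>\<omega>. \<bar>XS N \<omega> - AS N \<omega>\<bar> \<partial>M N) = (\<integral>\<omega>. \<bar>g \<omega>\<bar> \<partial>M N)"
    by (rule integral_cong_AE) (use AEeq in auto)
  also have "\<dots> = sqrt (real N) * (\<integral>\<omega>. \<bar>(\<Sum>k. f k \<omega>) - C\<bar> \<partial>M N)"
    by (simp add: g_def abs_mult)
  also have "(\<integral>\<omega>. \<bar>(\<Sum>k. f k \<omega>) - C\<bar> \<partial>M N) \<le> (\<integral>\<omega>. \<bar>\<Sum>k. f k \<omega>\<bar> + \<bar>C\<bar> \<partial>M N)"
    by (rule integral_mono) (use T(2) in auto)
  also have "\<dots> = (\<integral>\<omega>. \<bar>\<Sum>k. f k \<omega>\<bar> \<partial>M N) + \<bar>C\<bar>"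
    using T(2) by (simp add: MN.prob_space)
  also have "\<dots> \<le> Tl ?L + Tl ?L" using T(3) mu_tail[of ?L] by (simp add: C_def)
  finally show "(\<integral>\<omega>. \<bar>XS N \<omega> - AS N \<omega>\<bar> \<partial>M N) \<le> sqrt (real N) * (2 * Tl ?L)"
    by (simp add: mult_left_mono)
qed

lemma S_conv: "weak_conv_m (\<lambda>N. distr (M N) borel (XS N)) (normal_law 0 sig2)"
proof (rule weak_conv_from_char)
  have s0: "0 \<le> sig2" unfolding sig2_def
    using var_le_sq(2)[OF P D0_int D0_sq] summable_vc vv_nn c_pos
    by (intro add_nonneg_nonneg suminf_nonneg) (auto intro: divide_nonneg_pos)
  show "real_distribution (normal_law 0 sig2)" by (rule real_distribution_normal_law[OF s0])
  show "real_distribution (distr (M N) borel (XS N))" if N1: "1 \<le> N" for N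
  proof -
    interpret MN: prob_space "M N" by (rule M_prob[OF N1])
    show ?thesis by (rule MN.real_distribution_distr) (rule S_bound(1)[OF N1])
  qed
  fix t
  have err: "(\<lambda>N. \<bar>t\<bar> * (sqrt (real N) * (2 * Tl (Lvl c N)))) \<longlonglongrightarrow> 0"
  proof -
    have "(\<lambda>N. sqrt (real N) * (sqrt VD * sqrt (1 / phiD) ^ Lvl c N / (1 - sqrt (1 / phiD)))) \<longlonglongrightarrow> 0"
      by (rule tail_decay[OF phiN cl(1) conjunct1[OF A2] Lvl_le Lvl_filterlim less_imp_le[OF VD]])
    then have "(\<lambda>N. \<bar>t\<bar> * 2 * (sqrt (real N) * Tl (Lvl c N))) \<longlonglongrightarrow> \<bar>t\<bar> * 2 * 0"
      unfolding Tl_def q_def by (intro tendsto_mult tendsto_const)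
    then show ?thesis by (simp add: mult_ac)
  qed
  have bnd: "\<forall>\<^sub>F N in sequentially. norm (char (distr (M N) borel (XS N)) t - Phi N t) \<le> \<bar>t\<bar> * (sqrt (real N) * (2 * Tl (Lvl c N)))"
    using eventually_ge_at_top[of 1]
  proof eventually_elim
    case (elim N)
    interpret MN: prob_space "M N" by (rule M_prob[OF elim])
    note SB = S_bound[OF elim]
    have "norm (char (distr (M N) borel (XS N)) t - Phi N t) = norm (char (distr (M N) borel (XS N)) t - char (distr (M N) borel (AS N)) t)"
      by (simp add: S_char[OF elim])
    also have "\<dots> \<le> \<bar>t\<bar> * (\<integral>\<omega>. \<bar>XS N \<omega> - AS N \<omega>\<bar> \<partial>M N)"
      by (rule MN.char_diff_le[OF SB(1) SB(2) SB(3)])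
    also have "\<dots> \<le> \<bar>t\<bar> * (sqrt (real N) * (2 * Tl (Lvl c N)))"
      by (rule mult_left_mono[OF SB(4)]) simp
    finally show ?case .
  qed
  have "(\<lambda>N. char (distr (M N) borel (XS N)) t - Phi N t) \<longlonglongrightarrow> 0"
    by (rule Lim_null_comparison[OF bnd err])
  then have "(\<lambda>N. (char (distr (M N) borel (XS N)) t - Phi N t) + Phi N t) \<longlonglongrightarrow> 0 + char (normal_law 0 sig2) t"
    by (intro tendsto_add Phi_lim)
  then show "(\<lambda>N. char (distr (M N) borel (XS N)) t) \<longlonglongrightarrow> char (normal_law 0 sig2) t" by simp
qed

end

locale ctxR = ctxD c P D0 D mt mu VD phiD cl cu phiN
  for c :: "nat \<Rightarrow> real" and P :: "'a measure" and D0 D mt mu VD phiD cl cu phiN +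
  fixes M' :: "nat \<Rightarrow> 'c measure" and X0' :: "nat \<Rightarrow> nat \<Rightarrow> 'c \<Rightarrow> real"
    and Nr' :: "nat \<Rightarrow> nat \<Rightarrow> 'c \<Rightarrow> nat" and Y' :: "nat \<Rightarrow> nat \<Rightarrow> nat \<Rightarrow> 'c \<Rightarrow> real"
  assumes M'_prob: "\<And>N. N \<ge> 1 \<Longrightarrow> prob_space (M' N)"
    and X0'_law: "\<And>N r. N \<ge> 1 \<Longrightarrow> r \<in> {1..N} \<Longrightarrow>
        X0' N r \<in> borel_measurable (M' N) \<and> distr (M' N) borel (X0' N r) = distr P borel D0"
    and Nr'_rv: "\<And>N l. N \<ge> 1 \<Longrightarrow> Nr' N l \<in> measurable (M' N) (count_space UNIV)"
    and Nr'_det: "\<And>N l \<omega>. N \<ge> 1 \<Longrightarrow> l \<le> Lvl c N \<Longrightarrow> \<omega> \<in> space (M' N) \<Longrightarrow>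
        Nr' N l \<omega> = nsamp c N l"
    and Nr'_bern: "\<And>N l. N \<ge> 1 \<Longrightarrow> Lvl c N < l \<Longrightarrow>
        distr (M' N) (count_space UNIV) (Nr' N l)
          = measure_pmf (map_pmf (\<lambda>b. if b then 1 else 0) (bernoulli_pmf (c l * real N)))"
    and Y'_law: "\<And>N l r. N \<ge> 1 \<Longrightarrow> r \<in> {1..nsamp c N l} \<Longrightarrow>
        Y' N l r \<in> borel_measurable (M' N) \<and> distr (M' N) borel (Y' N l r) = distr P borel (D l)"
    and blocks_indep: "\<And>N. N \<ge> 1 \<Longrightarrow>
        prob_space.indep_sets (M' N) (blk_sets (M' N) c N (X0' N) (Nr' N) (Y' N)) (blk_index c N)"
begin

definition "Bset N = B0 ` {1..N} \<union> (\<Union>l<Lvl c N. BY l ` {1..nsamp c N l})"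

definition "VV N b = (case b of B0 r \<Rightarrow> X0' N r | BY l r \<Rightarrow> Y' N l r
    | BN l \<Rightarrow> (\<lambda>\<omega>. real (Nr' N l \<omega>)) | BTail \<Rightarrow> (\<lambda>_. 0))"

lemma Bset_sub: "Bset N \<subseteq> blk_index c N"
  unfolding Bset_def blk_index_def by auto

lemma Bset_indep:
  assumes N1: "1 \<le> N"
  shows "prob_space.indep_vars (M' N) (\<lambda>_. borel) (VV N) (Bset N)"
proof -
  interpret MN: prob_space "M' N" by (rule M'_prob[OF N1])
  have ind: "MN.indep_sets (blk_sets (M' N) c N (X0' N) (Nr' N) (Y' N)) (Bset N)"
    by (rule MN.indep_sets_mono_index[OF Bset_sub blocks_indep[OF N1]])
  have eq: "blk_sets (M' N) c N (X0' N) (Nr' N) (Y' N) b = {VV N b -` A \<inter> space (M' N) | A. A \<in> sets borel}"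
    if "b \<in> Bset N" for b
  proof (cases b)
    case (BN l) then show ?thesis using that by (auto simp: Bset_def)
  next
    case BTail then show ?thesis using that by (auto simp: Bset_def)
  qed (simp_all add: blk_sets_def gen_def VV_def)
  show ?thesis unfolding MN.indep_vars_def2
  proof
    show "\<forall>b\<in>Bset N. VV N b \<in> borel_measurable (M' N)"
    proof
      fix b assume b: "b \<in> Bset N"
      then show "VV N b \<in> borel_measurable (M' N)"
      proof (cases b rule: blk.exhaust)
        case (B0 r) then show ?thesis using b X0'_law[OF N1] by (auto simp: Bset_def VV_def)
      next
        case (BY l r) then show ?thesis using b Y'_law[OF N1] by (auto simp: Bset_def VV_def)
      qed (use b in \<open>auto simp: Bset_def\<close>)
    qed
    show "MN.indep_sets (\<lambda>b. {VV N b -` A \<inter> space (M' N) | A. A \<in> sets borel}) (Bset N)"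
    proof -
      have "MN.indep_sets (blk_sets (M' N) c N (X0' N) (Nr' N) (Y' N)) (Bset N) \<longleftrightarrow>
          MN.indep_sets (\<lambda>b. {VV N b -` A \<inter> space (M' N) | A. A \<in> sets borel}) (Bset N)"
        by (rule MN.indep_sets_cong) (simp_all add: eq)
      then show ?thesis using ind by simp
    qed
  qed
qed

lemma tail_indep:
  assumes N1: "1 \<le> N" and l: "Lvl c N < l" and j: "Lvl c N \<le> j"
  shows "prob_space.indep_var (M' N) borel (Y' N j 1) borel (\<lambda>\<omega>. real (Nr' N l \<omega>))"
proof -
  interpret MN: prob_space "M' N" by (rule M'_prob[OF N1])
  let ?F = "blk_sets (M' N) c N (X0' N) (Nr' N) (Y' N)"
  define g where "g i = (if i then BTail else BN l)" for i
  have gU: "g ` UNIV \<subseteq> blk_index c N" using l by (auto simp: g_def blk_index_def UNIV_bool)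
  have inj: "inj_on g UNIV" by (auto simp: g_def inj_on_def split: if_splits)
  have ind: "MN.indep_sets (\<lambda>i. ?F (g i)) UNIV"
    by (rule MN.indep_sets_reindex[OF MN.indep_sets_mono_index[OF gU blocks_indep[OF N1]] inj])
  have nj: "1 \<le> nsamp c N j" by (rule nsamp_pos[OF N1])
  have Ym: "Y' N j 1 \<in> borel_measurable (M' N)" using Y'_law[OF N1, of 1 j] nj by auto
  have Zm: "(\<lambda>\<omega>. real (Nr' N l \<omega>)) \<in> borel_measurable (M' N)"
    by (rule measurable_compose[OF Nr'_rv[OF N1]]) simp
  show ?thesis
    unfolding MN.indep_var_def MN.indep_vars_def2
  proof
    show "\<forall>i\<in>UNIV. case_bool (Y' N j 1) (\<lambda>\<omega>. real (Nr' N l \<omega>)) i \<in> measurable (M' N) (case_bool borel borel i)"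
      using Ym Zm by (simp split: bool.split)
    show "MN.indep_sets (\<lambda>i. {case_bool (Y' N j 1) (\<lambda>\<omega>. real (Nr' N l \<omega>)) i -` A \<inter> space (M' N) | A. A \<in> sets (case_bool borel borel i)}) UNIV"
    proof (rule MN.indep_sets_mono_sets[OF ind])
      fix i :: bool
      show "{case_bool (Y' N j 1) (\<lambda>\<omega>. real (Nr' N l \<omega>)) i -` A \<inter> space (M' N) | A. A \<in> sets (case_bool borel borel i)} \<subseteq> ?F (g i)"
      proof (cases i)
        case True
        have e1: "{case_bool (Y' N j 1) (\<lambda>\<omega>. real (Nr' N l \<omega>)) i -` A \<inter> space (M' N) | A. A \<in> sets (case_bool borel borel i)}
            = gen (M' N) (Y' N j 1)" using True by (simp add: gen_def)
        have e2: "?F (g i) = sigma_sets (space (M' N)) (\<Union>l\<in>{Lvl c N..}. gen (M' N) (Y' N l 1))"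
          using True by (simp add: g_def blk_sets_def)
        have "gen (M' N) (Y' N j 1) \<subseteq> (\<Union>l\<in>{Lvl c N..}. gen (M' N) (Y' N l 1))" using j by blast
        also have "\<dots> \<subseteq> sigma_sets (space (M' N)) (\<Union>l\<in>{Lvl c N..}. gen (M' N) (Y' N l 1))"
          by (rule sigma_sets_superset_generator)
        finally show ?thesis using e1 e2 by simp
      next
        case False
        have e1: "{case_bool (Y' N j 1) (\<lambda>\<omega>. real (Nr' N l \<omega>)) i -` A \<inter> space (M' N) | A. A \<in> sets (case_bool borel borel i)}
            = gen (M' N) (\<lambda>\<omega>. real (Nr' N l \<omega>))" using False by (simp add: gen_def)
        have e2: "?F (g i) = gen (M' N) (\<lambda>\<omega>. real (Nr' N l \<omega>))"
          using False by (simp add: g_def blk_sets_def)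
        show ?thesis using e1 e2 by simp
      qed
    qed
  qed
qed

end

context ctxR begin

lemma Bset_fin: "finite (Bset N)" by (simp add: Bset_def)

lemma Bset_sum:
  fixes f :: "blk \<Rightarrow> 'x::comm_monoid_add"
  shows "(\<Sum>b\<in>Bset N. f b) = (\<Sum>r\<in>{1..N}. f (B0 r)) + (\<Sum>l<Lvl c N. \<Sum>r\<in>{1..nsamp c N l}. f (BY l r))"
proof -
  have d: "B0 ` {1..N} \<inter> (\<Union>l<Lvl c N. BY l ` {1..nsamp c N l}) = {}" by auto
  have "(\<Sum>b\<in>Bset N. f b) = (\<Sum>b\<in>B0 ` {1..N}. f b) + (\<Sum>b\<in>(\<Union>l<Lvl c N. BY l ` {1..nsamp c N l}). f b)"
    unfolding Bset_def by (rule sum.union_disjoint) (auto simp: d)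
  also have "(\<Sum>b\<in>B0 ` {1..N}. f b) = (\<Sum>r\<in>{1..N}. f (B0 r))"
    by (rule sum.reindex_cong[OF _ refl refl]) (auto simp: inj_on_def)
  also have "(\<Sum>b\<in>(\<Union>l<Lvl c N. BY l ` {1..nsamp c N l}). f b) = (\<Sum>l<Lvl c N. \<Sum>b\<in>BY l ` {1..nsamp c N l}. f b)"
    by (rule sum.UNION_disjoint) auto
  also have "\<dots> = (\<Sum>l<Lvl c N. \<Sum>r\<in>{1..nsamp c N l}. f (BY l r))"
    by (intro sum.cong refl sum.reindex_cong[OF _ refl refl]) (auto simp: inj_on_def)
  finally show ?thesis .
qed

lemma Bset_prod:
  fixes f :: "blk \<Rightarrow> 'x::comm_monoid_mult"
  shows "(\<Prod>b\<in>Bset N. f b) = (\<Prod>r\<in>{1..N}. f (B0 r)) * (\<Prod>l<Lvl c N. \<Prod>r\<in>{1..nsamp c N l}. f (BY l r))"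
proof -
  have d: "B0 ` {1..N} \<inter> (\<Union>l<Lvl c N. BY l ` {1..nsamp c N l}) = {}" by auto
  have "(\<Prod>b\<in>Bset N. f b) = (\<Prod>b\<in>B0 ` {1..N}. f b) * (\<Prod>b\<in>(\<Union>l<Lvl c N. BY l ` {1..nsamp c N l}). f b)"
    unfolding Bset_def by (rule prod.union_disjoint) (auto simp: d)
  also have "(\<Prod>b\<in>B0 ` {1..N}. f b) = (\<Prod>r\<in>{1..N}. f (B0 r))"
    by (rule prod.reindex_cong[OF _ refl refl]) (auto simp: inj_on_def)
  also have "(\<Prod>b\<in>(\<Union>l<Lvl c N. BY l ` {1..nsamp c N l}). f b) = (\<Prod>l<Lvl c N. \<Prod>b\<in>BY l ` {1..nsamp c N l}. f b)"
    by (rule prod.UNION_disjoint) auto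
  also have "\<dots> = (\<Prod>l<Lvl c N. \<Prod>r\<in>{1..nsamp c N l}. f (BY l r))"
    by (intro prod.cong refl prod.reindex_cong[OF _ refl refl]) (auto simp: inj_on_def)
  finally show ?thesis .
qed

definition "aff N b x = (case b of B0 r \<Rightarrow> (1 / sqrt (real N)) * (x - mt 0)
    | BY l r \<Rightarrow> (sqrt (real N) / real (nsamp c N l)) * (x - m l) | _ \<Rightarrow> 0)"

lemma aff_meas: "aff N b \<in> borel_measurable borel"
  by (cases b) (simp_all add: aff_def[abs_def])

definition "ARf N \<omega> = (\<Sum>b\<in>Bset N. aff N b (VV N b \<omega>))"

lemma R_char:
  assumes N1: "1 \<le> N"
  shows "char (distr (M' N) borel (ARf N)) t = Phi N t"
proof -
  interpret MN: prob_space "M' N" by (rule M'_prob[OF N1])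
  have ind: "MN.indep_vars (\<lambda>_. borel) (\<lambda>b \<omega>. aff N b (VV N b \<omega>)) (Bset N)"
    by (rule MN.indep_vars_compose2[OF Bset_indep[OF N1], where Y="aff N"]) (rule aff_meas)
  have "char (distr (M' N) borel (ARf N)) t = (\<Prod>b\<in>Bset N. char (distr (M' N) borel (\<lambda>\<omega>. aff N b (VV N b \<omega>))) t)"
    unfolding ARf_def[abs_def] by (rule MN.char_distr_sum[OF ind])
  also have "\<dots> = (\<Prod>r\<in>{1..N}. char (distr (M' N) borel (\<lambda>\<omega>. aff N (B0 r) (VV N (B0 r) \<omega>))) t) *
      (\<Prod>l<Lvl c N. \<Prod>r\<in>{1..nsamp c N l}. char (distr (M' N) borel (\<lambda>\<omega>. aff N (BY l r) (VV N (BY l r) \<omega>))) t)"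
    by (rule Bset_prod)
  also have "(\<Prod>r\<in>{1..N}. char (distr (M' N) borel (\<lambda>\<omega>. aff N (B0 r) (VV N (B0 r) \<omega>))) t) = char mu0 (t / sqrt (real N)) ^ N"
  proof -
    have "(\<Prod>r\<in>{1..N}. char (distr (M' N) borel (\<lambda>\<omega>. aff N (B0 r) (VV N (B0 r) \<omega>))) t) = (\<Prod>r\<in>{1..N}. char mu0 (t / sqrt (real N)))"
    proof (rule prod.cong[OF refl])
      fix r assume r: "r \<in> {1..N}"
      have "char (distr (M' N) borel (\<lambda>\<omega>. (1 / sqrt (real N)) * (X0' N r \<omega> - mt 0))) t
          = char (distr P borel (\<lambda>x. D0 x - mt 0)) ((1 / sqrt (real N)) * t)"
        using X0'_law[OF N1 r] by (intro char_transfer D0_rv) auto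
      then show "char (distr (M' N) borel (\<lambda>\<omega>. aff N (B0 r) (VV N (B0 r) \<omega>))) t = char mu0 (t / sqrt (real N))"
        by (simp add: aff_def VV_def mu0_def)
    qed
    then show ?thesis by simp
  qed
  also have "(\<Prod>l<Lvl c N. \<Prod>r\<in>{1..nsamp c N l}. char (distr (M' N) borel (\<lambda>\<omega>. aff N (BY l r) (VV N (BY l r) \<omega>))) t)
     = (\<Prod>l<Lvl c N. char (mul l) (t * sqrt (real N) / real (nsamp c N l)) ^ nsamp c N l)"
  proof (rule prod.cong[OF refl])
    fix l assume "l \<in> {..<Lvl c N}"
    have "(\<Prod>r\<in>{1..nsamp c N l}. char (distr (M' N) borel (\<lambda>\<omega>. aff N (BY l r) (VV N (BY l r) \<omega>))) t)
       = (\<Prod>r\<in>{1..nsamp c N l}. char (mul l) (t * sqrt (real N) / real (nsamp c N l)))"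
    proof (rule prod.cong[OF refl])
      fix r assume r: "r \<in> {1..nsamp c N l}"
      have "char (distr (M' N) borel (\<lambda>\<omega>. (sqrt (real N) / real (nsamp c N l)) * (Y' N l r \<omega> - m l))) t
          = char (distr P borel (\<lambda>x. D l x - m l)) ((sqrt (real N) / real (nsamp c N l)) * t)"
        using Y'_law[OF N1 r] by (intro char_transfer D_rv) auto
      then show "char (distr (M' N) borel (\<lambda>\<omega>. aff N (BY l r) (VV N (BY l r) \<omega>))) t = char (mul l) (t * sqrt (real N) / real (nsamp c N l))"
        by (simp add: aff_def VV_def mul_def mult.commute)
    qed
    then show "(\<Prod>r\<in>{1..nsamp c N l}. char (distr (M' N) borel (\<lambda>\<omega>. aff N (BY l r) (VV N (BY l r) \<omega>))) t)
       = char (mul l) (t * sqrt (real N) / real (nsamp c N l)) ^ nsamp c N l" by simp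
  qed
  finally show ?thesis by (simp add: Phi_def)
qed

end

context ctxR begin

definition "TT N cR l \<omega> = (if Lvl c N < l then
                 (if Nr' N l \<omega> = 1 then 1 else 0) / (\<integral>x. real (Nr' N l x) \<partial>M' N)
                   * (Y' N l 1 \<omega> - Y' N (Lvl c N) 1 \<omega> * cR ^ (l - Lvl c N))
               else 0)"

lemma Y'1_facts:
  assumes N1: "1 \<le> N"
  shows "Y' N j 1 \<in> borel_measurable (M' N)" "integrable (M' N) (Y' N j 1)"
    "(\<integral>\<omega>. \<bar>Y' N j 1 \<omega>\<bar> \<partial>M' N) \<le> B j"
proof -
  have nj: "1 \<le> nsamp c N j" by (rule nsamp_pos[OF N1])
  have law: "Y' N j 1 \<in> borel_measurable (M' N)" "distr (M' N) borel (Y' N j 1) = distr P borel (D j)"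
    using Y'_law[OF N1, of 1 j] nj by auto
  show "Y' N j 1 \<in> borel_measurable (M' N)" by (rule law(1))
  show "integrable (M' N) (Y' N j 1)"
    using law_transfer(1)[OF law(1) D_rv law(2), of "\<lambda>x. x"] D_int[of j] by simp
  have "(\<integral>\<omega>. \<bar>Y' N j 1 \<omega>\<bar> \<partial>M' N) = (\<integral>x. \<bar>D j x\<bar> \<partial>P)"
    using law_transfer(2)[OF law(1) D_rv law(2), of abs] by simp
  then show "(\<integral>\<omega>. \<bar>Y' N j 1 \<omega>\<bar> \<partial>M' N) \<le> B j" using absD(2)[of j] by simp
qed

lemma TT_meas:
  assumes N1: "1 \<le> N"
  shows "TT N cR l \<in> borel_measurable (M' N)"
proof (cases "Lvl c N < l")
  case True
  note Ym = Y'1_facts(1)[OF N1]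
  have [measurable]: "Y' N l 1 \<in> borel_measurable (M' N)" "Y' N (Lvl c N) 1 \<in> borel_measurable (M' N)"
    by (rule Ym)+
  have [measurable]: "Nr' N l \<in> measurable (M' N) (count_space UNIV)" by (rule Nr'_rv[OF N1])
  show ?thesis using True unfolding TT_def[abs_def] by measurable
next
  case False
  then show ?thesis unfolding TT_def[abs_def] by simp
qed

lemma R_tail_term:
  assumes N1: "1 \<le> N" and cR: "0 \<le> cR" and lL: "Lvl c N < l"
  shows "integrable (M' N) (TT N cR l)"
    and "(\<integral>\<omega>. \<bar>TT N cR l \<omega>\<bar> \<partial>M' N) \<le> B l + cR ^ (l - Lvl c N) * B (Lvl c N)"
proof -
  interpret MN: prob_space "M' N" by (rule M'_prob[OF N1])
  let ?L = "Lvl c N"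
  let ?k = "l - ?L"
  define p where "p = c l * real N"
  have p: "0 < p" "p \<le> 1" using c_pos[of l] N1 Lvl_ge[of N l] lL by (auto simp: p_def)
  note bf = MN.bern_facts[OF Nr'_rv[OF N1] Nr'_bern[OF N1 lL, folded p_def] less_imp_le[OF p(1)] p(2)]
  have EN: "(\<integral>\<omega>. real (Nr' N l \<omega>) \<partial>M' N) = p" by (rule bf(3))
  have Zm[measurable]: "(\<lambda>\<omega>. real (Nr' N l \<omega>)) \<in> borel_measurable (M' N)" using bf(2) by auto
  note Yl = Y'1_facts[OF N1, of l] and YL = Y'1_facts[OF N1, of ?L]
  have [measurable]: "Y' N l 1 \<in> borel_measurable (M' N)" "Y' N ?L 1 \<in> borel_measurable (M' N)"
    by (rule Yl(1) YL(1))+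
  have [measurable]: "Y' N l (Suc 0) \<in> borel_measurable (M' N)" "Y' N ?L (Suc 0) \<in> borel_measurable (M' N)"
    using Yl(1) YL(1) by simp_all
  have indl: "MN.indep_var borel (Y' N l 1) borel (\<lambda>\<omega>. real (Nr' N l \<omega>))"
    by (rule tail_indep[OF N1 lL]) (use lL in simp)
  have indL: "MN.indep_var borel (Y' N ?L 1) borel (\<lambda>\<omega>. real (Nr' N l \<omega>))"
    by (rule tail_indep[OF N1 lL]) simp
  have Tm[measurable]: "TT N cR l \<in> borel_measurable (M' N)" by (rule TT_meas[OF N1])
  define h where "h \<omega> = (Y' N l 1 \<omega> * real (Nr' N l \<omega>) - cR ^ ?k * (Y' N ?L 1 \<omega> * real (Nr' N l \<omega>))) / p" for \<omega>
  have hi: "integrable (M' N) h"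
    unfolding h_def
    using MN.indep_var_integrable[OF indl Yl(2) bf(2)] MN.indep_var_integrable[OF indL YL(2) bf(2)]
    by simp
  have [measurable]: "h \<in> borel_measurable (M' N)" using hi by auto
  have AEeq: "AE \<omega> in M' N. TT N cR l \<omega> = h \<omega>"
    using bf(1) by eventually_elim (use lL p in \<open>auto simp: TT_def h_def EN field_simps\<close>)
  have "integrable (M' N) (TT N cR l) \<longleftrightarrow> integrable (M' N) h"
    by (rule integrable_cong_AE[OF Tm _ AEeq]) simp
  then show "integrable (M' N) (TT N cR l)" using hi by simp
  have ia: "integrable (M' N) (\<lambda>\<omega>. \<bar>Y' N l 1 \<omega>\<bar> * real (Nr' N l \<omega>))"
    by (rule MN.indep_abs_mult(1)[OF indl Yl(2) bf(2)])
  have iA: "integrable (M' N) (\<lambda>\<omega>. \<bar>Y' N ?L 1 \<omega>\<bar> * real (Nr' N l \<omega>))"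
    by (rule MN.indep_abs_mult(1)[OF indL YL(2) bf(2)])
  have "(\<integral>\<omega>. \<bar>TT N cR l \<omega>\<bar> \<partial>M' N) = (\<integral>\<omega>. \<bar>h \<omega>\<bar> \<partial>M' N)"
    by (rule integral_cong_AE) (use AEeq in auto)
  also have "\<dots> \<le> (\<integral>\<omega>. (\<bar>Y' N l 1 \<omega>\<bar> * real (Nr' N l \<omega>) + cR ^ ?k * (\<bar>Y' N ?L 1 \<omega>\<bar> * real (Nr' N l \<omega>))) / p \<partial>M' N)"
  proof (rule integral_mono)
    show "integrable (M' N) (\<lambda>\<omega>. \<bar>h \<omega>\<bar>)" using hi by simp
    show "integrable (M' N) (\<lambda>\<omega>. (\<bar>Y' N l 1 \<omega>\<bar> * real (Nr' N l \<omega>) + cR ^ ?k * (\<bar>Y' N ?L 1 \<omega>\<bar> * real (Nr' N l \<omega>))) / p)"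
      using ia iA by simp
    fix \<omega>
    have "\<bar>Y' N l 1 \<omega> * real (Nr' N l \<omega>) - cR ^ ?k * (Y' N ?L 1 \<omega> * real (Nr' N l \<omega>))\<bar>
        \<le> \<bar>Y' N l 1 \<omega>\<bar> * real (Nr' N l \<omega>) + cR ^ ?k * (\<bar>Y' N ?L 1 \<omega>\<bar> * real (Nr' N l \<omega>))"
      using cR by (simp add: abs_mult abs_triangle_ineq4[THEN order_trans] )
    then show "\<bar>h \<omega>\<bar> \<le> (\<bar>Y' N l 1 \<omega>\<bar> * real (Nr' N l \<omega>) + cR ^ ?k * (\<bar>Y' N ?L 1 \<omega>\<bar> * real (Nr' N l \<omega>))) / p"
      using p by (simp add: h_def divide_right_mono)
  qed
  also have "\<dots> = ((\<integral>\<omega>. \<bar>Y' N l 1 \<omega>\<bar> * real (Nr' N l \<omega>) \<partial>M' N) + cR ^ ?k * (\<integral>\<omega>. \<bar>Y' N ?L 1 \<omega>\<bar> * real (Nr' N l \<omega>) \<partial>M' N)) / p"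
    using ia iA by simp
  also have "\<dots> = (\<integral>\<omega>. \<bar>Y' N l 1 \<omega>\<bar> \<partial>M' N) + cR ^ ?k * (\<integral>\<omega>. \<bar>Y' N ?L 1 \<omega>\<bar> \<partial>M' N)"
    using MN.indep_abs_mult(2)[OF indl Yl(2) bf(2)] MN.indep_abs_mult(2)[OF indL YL(2) bf(2)] EN p
    by (simp add: field_simps)
  also have "\<dots> \<le> B l + cR ^ ?k * B ?L"
    using Yl(3) YL(3) cR by (intro add_mono mult_left_mono) auto
  finally show "(\<integral>\<omega>. \<bar>TT N cR l \<omega>\<bar> \<partial>M' N) \<le> B l + cR ^ (l - Lvl c N) * B (Lvl c N)" .
qed

end

lemma abs3: fixes a b C cR :: real assumes "cR < 1"
  shows "\<bar>a / (1 - cR) + b - C\<bar> \<le> \<bar>a\<bar> / (1 - cR) + \<bar>b\<bar> + \<bar>C\<bar>"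
proof -
  have e: "\<bar>a / (1 - cR)\<bar> = \<bar>a\<bar> / (1 - cR)" using assms by (simp add: abs_divide)
  show ?thesis using e abs_triangle_ineq[of "a / (1 - cR)" b] abs_triangle_ineq4[of "a / (1 - cR) + b" C]
    by linarith
qed

lemma int3:
  fixes M :: "'b measure" and f g :: "'b \<Rightarrow> real"
  assumes pM: "prob_space M" and f: "integrable M f" and g: "integrable M g"
  shows "(\<integral>\<omega>. \<bar>f \<omega>\<bar> / d + \<bar>g \<omega>\<bar> + \<bar>C\<bar> \<partial>M) = (\<integral>\<omega>. \<bar>f \<omega>\<bar> \<partial>M) / d + (\<integral>\<omega>. \<bar>g \<omega>\<bar> \<partial>M) + \<bar>C\<bar>"
proof -
  interpret prob_space M by (rule pM)
  have i1: "integrable M (\<lambda>\<omega>. \<bar>f \<omega>\<bar> / d)" using f by simp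
  have i2: "integrable M (\<lambda>\<omega>. \<bar>g \<omega>\<bar>)" using g by simp
  have "(\<integral>\<omega>. \<bar>f \<omega>\<bar> / d + \<bar>g \<omega>\<bar> + \<bar>C\<bar> \<partial>M) = (\<integral>\<omega>. \<bar>f \<omega>\<bar> / d + \<bar>g \<omega>\<bar> \<partial>M) + (\<integral>\<omega>. \<bar>C\<bar> \<partial>M)"
    by (rule Bochner_Integration.integral_add) (use i1 i2 in auto)
  also have "(\<integral>\<omega>. \<bar>f \<omega>\<bar> / d + \<bar>g \<omega>\<bar> \<partial>M) = (\<integral>\<omega>. \<bar>f \<omega>\<bar> / d \<partial>M) + (\<integral>\<omega>. \<bar>g \<omega>\<bar> \<partial>M)"
    by (rule Bochner_Integration.integral_add[OF i1 i2])
  also have "(\<integral>\<omega>. \<bar>f \<omega>\<bar> / d \<partial>M) = (\<integral>\<omega>. \<bar>f \<omega>\<bar> \<partial>M) / d"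
    by (rule integral_divide_zero)
  also have "(\<integral>\<omega>. \<bar>C\<bar> \<partial>M) = \<bar>C\<bar>" by (simp add: prob_space)
  finally show ?thesis .
qed

lemma int3_mono:
  fixes M :: "'b measure" and f g :: "'b \<Rightarrow> real"
  assumes pM: "prob_space M" and f: "integrable M f" and g: "integrable M g" and cR: "cR < 1"
  shows "(\<integral>\<omega>. \<bar>f \<omega> / (1 - cR) + g \<omega> - C\<bar> \<partial>M) \<le> (\<integral>\<omega>. \<bar>f \<omega>\<bar> \<partial>M) / (1 - cR) + (\<integral>\<omega>. \<bar>g \<omega>\<bar> \<partial>M) + \<bar>C\<bar>"
proof -
  interpret prob_space M by (rule pM)
  have "(\<integral>\<omega>. \<bar>f \<omega> / (1 - cR) + g \<omega> - C\<bar> \<partial>M) \<le> (\<integral>\<omega>. \<bar>f \<omega>\<bar> / (1 - cR) + \<bar>g \<omega>\<bar> + \<bar>C\<bar> \<partial>M)"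
  proof (rule integral_mono)
    show "integrable M (\<lambda>\<omega>. \<bar>f \<omega> / (1 - cR) + g \<omega> - C\<bar>)" using f g by simp
    show "integrable M (\<lambda>\<omega>. \<bar>f \<omega>\<bar> / (1 - cR) + \<bar>g \<omega>\<bar> + \<bar>C\<bar>)" using f g by simp
  qed (rule abs3[OF cR])
  also have "\<dots> = (\<integral>\<omega>. \<bar>f \<omega>\<bar> \<partial>M) / (1 - cR) + (\<integral>\<omega>. \<bar>g \<omega>\<bar> \<partial>M) + \<bar>C\<bar>"
    by (rule int3[OF pM f g])
  finally show ?thesis .
qed

context ctxR begin

definition "XR N cR \<omega> = sqrt (real N) * (SR_est (M' N) c N cR (X0' N) (Nr' N) (Y' N) \<omega> - mu)"

lemma bT_sum:
  fixes cR :: real and L :: nat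
  assumes cR: "0 \<le> cR" "cR < 1"
  defines "bT \<equiv> \<lambda>l. if L < l then B l + cR ^ (l - L) * B L else 0"
  shows "summable bT" "suminf bT \<le> Tl L + B L / (1 - cR)"
proof -
  have g: "(\<lambda>k. cR ^ k * B L) sums (B L / (1 - cR))"
    using sums_mult2[OF geometric_sums[of cR], of "B L"] cR by (simp add: field_simps)
  have s2: "(\<lambda>k. B (k + L) + cR ^ k * B L) sums (Tl L + B L / (1 - cR))"
    by (rule sums_add[OF B_tail_sums g])
  have le: "bT (k + L) \<le> B (k + L) + cR ^ k * B L" for k
    using B_nn[of "k + L"] B_nn[of L] cR by (auto simp: bT_def)
  have nn: "0 \<le> bT l" for l using B_nn[of l] B_nn[of L] cR by (auto simp: bT_def)
  have ss: "summable (\<lambda>k. bT (k + L))"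
    by (rule summable_comparison_test[OF _ sums_summable[OF s2]]) (use le nn in auto)
  then show sb: "summable bT" by (subst summable_iff_shift[symmetric, of _ L]) simp
  have "suminf bT = (\<Sum>k. bT (k + L)) + (\<Sum>l<L. bT l)" by (rule suminf_split_initial_segment[OF sb])
  also have "(\<Sum>l<L. bT l) = 0" by (simp add: bT_def)
  also have "(\<Sum>k. bT (k + L)) \<le> (\<Sum>k. B (k + L) + cR ^ k * B L)"
    by (rule suminf_le[OF le ss sums_summable[OF s2]])
  also have "\<dots> = Tl L + B L / (1 - cR)" using s2 by (simp add: sums_iff)
  finally show "suminf bT \<le> Tl L + B L / (1 - cR)" by simp
qed

lemma Slev'_low:
  assumes N1: "1 \<le> N" and l: "l \<le> Lvl c N" and \<omega>: "\<omega> \<in> space (M' N)"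
  shows "Slev (M' N) (Nr' N) (Y' N) l \<omega> = (\<Sum>r=1..nsamp c N l. Y' N l r \<omega>) / real (nsamp c N l)"
proof -
  interpret MN: prob_space "M' N" by (rule M'_prob[OF N1])
  have Nrn: "\<And>\<omega>. \<omega> \<in> space (M' N) \<Longrightarrow> Nr' N l \<omega> = nsamp c N l" using Nr'_det[OF N1 l] by simp
  have "(\<integral>\<omega>. real (Nr' N l \<omega>) \<partial>M' N) = (\<integral>\<omega>. real (nsamp c N l) \<partial>M' N)"
    by (rule Bochner_Integration.integral_cong) (auto simp: Nrn)
  then have EN: "(\<integral>\<omega>. real (Nr' N l \<omega>) \<partial>M' N) = real (nsamp c N l)" by (simp add: MN.prob_space)
  show ?thesis by (simp add: Slev_def EN Nrn[OF \<omega>])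
qed

lemma R_bound:
  assumes N1: "1 \<le> N" and cR: "0 \<le> cR" "cR < 1"
  shows "XR N cR \<in> borel_measurable (M' N)" "ARf N \<in> borel_measurable (M' N)"
    "integrable (M' N) (\<lambda>\<omega>. XR N cR \<omega> - ARf N \<omega>)"
    "(\<integral>\<omega>. \<bar>XR N cR \<omega> - ARf N \<omega>\<bar> \<partial>M' N) \<le> sqrt (real N) * ((2 + 2 / (1 - cR)) * Tl (Lvl c N))"
proof -
  interpret MN: prob_space "M' N" by (rule M'_prob[OF N1])
  let ?L = "Lvl c N"
  let ?S0 = "S0_est N (X0' N)"
  let ?Sl = "Slev (M' N) (Nr' N) (Y' N)"
  have VVm: "\<forall>b\<in>Bset N. VV N b \<in> borel_measurable (M' N)"
    using Bset_indep[OF N1] unfolding MN.indep_vars_def2 by blast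
  show ARm[measurable]: "ARf N \<in> borel_measurable (M' N)"
    unfolding ARf_def[abs_def]
    by (rule borel_measurable_sum) (use VVm in \<open>auto intro: measurable_compose[OF _ aff_meas]\<close>)
  have X0m: "?S0 \<in> borel_measurable (M' N)"
    unfolding S0_est_def[abs_def]
    by (intro borel_measurable_divide borel_measurable_sum borel_measurable_const) (use X0'_law[OF N1] in auto)
  have Slm: "?Sl l \<in> borel_measurable (M' N)" if l: "l < ?L" for l
  proof -
    have "?Sl l \<in> borel_measurable (M' N) \<longleftrightarrow> (\<lambda>\<omega>. (\<Sum>r=1..nsamp c N l. Y' N l r \<omega>) / real (nsamp c N l)) \<in> borel_measurable (M' N)"
      by (rule measurable_cong) (use Slev'_low[OF N1] l in auto)
    moreover have "(\<lambda>\<omega>. (\<Sum>r=1..nsamp c N l. Y' N l r \<omega>) / real (nsamp c N l)) \<in> borel_measurable (M' N)"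
      by (intro borel_measurable_divide borel_measurable_sum borel_measurable_const) (use Y'_law[OF N1] in auto)
    ultimately show ?thesis by simp
  qed
  note YL = Y'1_facts[OF N1, of ?L]
  have TTm: "TT N cR l \<in> borel_measurable (M' N)" for l by (rule TT_meas[OF N1])
  have SR_eq: "SR_est (M' N) c N cR (X0' N) (Nr' N) (Y' N) \<omega> =
      ?S0 \<omega> + (\<Sum>l<?L. ?Sl l \<omega>) + Y' N ?L 1 \<omega> / (1 - cR) + (\<Sum>l. TT N cR l \<omega>)" for \<omega>
    unfolding SR_est_def TT_def Let_def by simp
  show XRm[measurable]: "XR N cR \<in> borel_measurable (M' N)"
  proof -
    have "(\<lambda>\<omega>. ?S0 \<omega> + (\<Sum>l<?L. ?Sl l \<omega>) + Y' N ?L 1 \<omega> / (1 - cR) + (\<Sum>l. TT N cR l \<omega>)) \<in> borel_measurable (M' N)"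
      by (intro borel_measurable_add borel_measurable_sum borel_measurable_divide borel_measurable_const
          borel_measurable_suminf X0m Slm TTm YL(1)) auto
    then show ?thesis unfolding XR_def[abs_def] SR_eq by measurable
  qed
  define bT where "bT l = (if ?L < l then B l + cR ^ (l - ?L) * B ?L else 0)" for l
  have TT0: "TT N cR l = (\<lambda>_. 0)" if "\<not> ?L < l" for l
    using that by (intro ext) (simp add: TT_def)
  have TTi: "integrable (M' N) (TT N cR l)" for l
    by (cases "?L < l") (auto simp: R_tail_term(1)[OF N1 cR(1)] TT0)
  have TTb: "(\<integral>\<omega>. \<bar>TT N cR l \<omega>\<bar> \<partial>M' N) \<le> bT l" for l
    by (cases "?L < l") (auto simp: R_tail_term(2)[OF N1 cR(1)] TT0 bT_def)
  note bs = bT_sum[OF cR, of ?L, folded bT_def]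
  have sT: "summable (\<lambda>l. \<integral>\<omega>. \<bar>TT N cR l \<omega>\<bar> \<partial>M' N)"
    by (rule summable_comparison_test[OF _ bs(1)]) (use TTb in auto)
  note LT = L1_suminf[OF TTi sT]
  have TTsum: "(\<integral>\<omega>. \<bar>\<Sum>l. TT N cR l \<omega>\<bar> \<partial>M' N) \<le> Tl ?L + B ?L / (1 - cR)"
  proof -
    have "(\<integral>\<omega>. \<bar>\<Sum>l. TT N cR l \<omega>\<bar> \<partial>M' N) \<le> (\<Sum>l. \<integral>\<omega>. \<bar>TT N cR l \<omega>\<bar> \<partial>M' N)" by (rule LT(3))
    also have "\<dots> \<le> suminf bT" by (rule suminf_le[OF TTb sT bs(1)])
    also have "\<dots> \<le> Tl ?L + B ?L / (1 - cR)" by (rule bs(2))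
    finally show ?thesis .
  qed
  define C where "C = mu - mt ?L"
  define g where "g \<omega> = sqrt (real N) * (Y' N ?L 1 \<omega> / (1 - cR) + (\<Sum>l. TT N cR l \<omega>) - C)" for \<omega>
  have gi: "integrable (M' N) g" unfolding g_def using YL(2) LT(2) by simp
  have ARf_eq: "ARf N \<omega> = sqrt (real N) * (?S0 \<omega> - mt 0) + (\<Sum>l<?L. sqrt (real N) * (?Sl l \<omega> - m l))"
    if \<omega>: "\<omega> \<in> space (M' N)" for \<omega>
  proof -
    define s where "s = sqrt (real N)"
    have s: "0 < s" "real N = s * s" using N1 by (auto simp: s_def)
    have "ARf N \<omega> = (\<Sum>r\<in>{1..N}. aff N (B0 r) (VV N (B0 r) \<omega>)) + (\<Sum>l<?L. \<Sum>r\<in>{1..nsamp c N l}. aff N (BY l r) (VV N (BY l r) \<omega>))"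
      unfolding ARf_def by (rule Bset_sum)
    also have "(\<Sum>r\<in>{1..N}. aff N (B0 r) (VV N (B0 r) \<omega>)) = sqrt (real N) * (?S0 \<omega> - mt 0)"
    proof -
      have "(\<Sum>r\<in>{1..N}. aff N (B0 r) (VV N (B0 r) \<omega>)) = (\<Sum>r\<in>{1..N}. (1 / s) * (X0' N r \<omega> - mt 0))"
        by (simp add: aff_def VV_def s_def)
      also have "\<dots> = (1 / s) * ((\<Sum>r\<in>{1..N}. X0' N r \<omega>) - real N * mt 0)"
        by (simp add: sum_distrib_left[symmetric] sum_divide_distrib[symmetric] sum_subtractf)
      also have "\<dots> = s * ((\<Sum>r\<in>{1..N}. X0' N r \<omega>) / real N - mt 0)"
        using s by (simp add: field_simps)
      finally show ?thesis by (simp add: S0_est_def s_def)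
    qed
    also have "(\<Sum>l<?L. \<Sum>r\<in>{1..nsamp c N l}. aff N (BY l r) (VV N (BY l r) \<omega>)) = (\<Sum>l<?L. sqrt (real N) * (?Sl l \<omega> - m l))"
    proof (rule sum.cong[OF refl])
      fix l assume "l \<in> {..<?L}"
      then have l: "l < ?L" by simp
      let ?n = "nsamp c N l"
      have np: "0 < real ?n" using nsamp_pos[OF N1, of l] by simp
      have "(\<Sum>r\<in>{1..?n}. aff N (BY l r) (VV N (BY l r) \<omega>)) = (\<Sum>r\<in>{1..?n}. (sqrt (real N) / real ?n) * (Y' N l r \<omega> - m l))"
        by (simp add: aff_def VV_def)
      also have "\<dots> = (sqrt (real N) / real ?n) * ((\<Sum>r\<in>{1..?n}. Y' N l r \<omega>) - real ?n * m l)"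
        by (simp add: sum_distrib_left[symmetric] sum_divide_distrib[symmetric] sum_subtractf)
      also have "\<dots> = sqrt (real N) * ((\<Sum>r\<in>{1..?n}. Y' N l r \<omega>) / real ?n - m l)"
        using np by (simp add: field_simps)
      finally show "(\<Sum>r\<in>{1..?n}. aff N (BY l r) (VV N (BY l r) \<omega>)) = sqrt (real N) * (?Sl l \<omega> - m l)"
        using Slev'_low[OF N1 less_imp_le[OF l] \<omega>] by simp
    qed
    finally show ?thesis .
  qed
  have eqsp: "XR N cR \<omega> - ARf N \<omega> = g \<omega>" if \<omega>: "\<omega> \<in> space (M' N)" for \<omega>
  proof -
    have "(\<Sum>l<?L. sqrt (real N) * (?Sl l \<omega> - m l)) = sqrt (real N) * ((\<Sum>l<?L. ?Sl l \<omega>) - (mt ?L - mt 0))"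
      by (simp add: sum_distrib_left[symmetric] sum_subtractf m_telescope)
    then show ?thesis
      by (simp add: ARf_eq[OF \<omega>] XR_def SR_eq g_def C_def algebra_simps)
  qed
  have "integrable (M' N) (\<lambda>\<omega>. XR N cR \<omega> - ARf N \<omega>) \<longleftrightarrow> integrable (M' N) g"
    by (rule Bochner_Integration.integrable_cong) (auto simp: eqsp)
  then show "integrable (M' N) (\<lambda>\<omega>. XR N cR \<omega> - ARf N \<omega>)" using gi by simp
  have "(\<integral>\<omega>. \<bar>XR N cR \<omega> - ARf N \<omega>\<bar> \<partial>M' N) = (\<integral>\<omega>. \<bar>g \<omega>\<bar> \<partial>M' N)"
    by (rule Bochner_Integration.integral_cong) (auto simp: eqsp)
  also have "\<dots> = sqrt (real N) * (\<integral>\<omega>. \<bar>Y' N ?L 1 \<omega> / (1 - cR) + (\<Sum>l. TT N cR l \<omega>) - C\<bar> \<partial>M' N)"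
    by (simp add: g_def abs_mult)
  finally have e1: "(\<integral>\<omega>. \<bar>XR N cR \<omega> - ARf N \<omega>\<bar> \<partial>M' N) = sqrt (real N) * (\<integral>\<omega>. \<bar>Y' N ?L 1 \<omega> / (1 - cR) + (\<Sum>l. TT N cR l \<omega>) - C\<bar> \<partial>M' N)" .
  have "(\<integral>\<omega>. \<bar>Y' N ?L 1 \<omega> / (1 - cR) + (\<Sum>l. TT N cR l \<omega>) - C\<bar> \<partial>M' N)
      \<le> (\<integral>\<omega>. \<bar>Y' N ?L 1 \<omega>\<bar> \<partial>M' N) / (1 - cR) + (\<integral>\<omega>. \<bar>\<Sum>l. TT N cR l \<omega>\<bar> \<partial>M' N) + \<bar>C\<bar>"
    by (rule int3_mono[OF MN.prob_space_axioms YL(2) LT(2) cR(2)])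
  also have "\<dots> \<le> B ?L / (1 - cR) + (Tl ?L + B ?L / (1 - cR)) + Tl ?L"
    using YL(3) TTsum mu_tail[of ?L] cR by (intro add_mono divide_right_mono) (auto simp: C_def)
  also have "\<dots> \<le> Tl ?L / (1 - cR) + (Tl ?L + Tl ?L / (1 - cR)) + Tl ?L"
    using B_le_Tl[of ?L] cR by (intro add_mono divide_right_mono) auto
  also have "\<dots> = (2 + 2 / (1 - cR)) * Tl ?L"
  proof -
    have "(2 + 2 / (1 - cR)) * Tl ?L = 2 * Tl ?L + 2 * (Tl ?L / (1 - cR))" by (simp add: distrib_right)
    then show ?thesis by simp
  qed
  finally have e2: "(\<integral>\<omega>. \<bar>Y' N ?L 1 \<omega> / (1 - cR) + (\<Sum>l. TT N cR l \<omega>) - C\<bar> \<partial>M' N) \<le> (2 + 2 / (1 - cR)) * Tl ?L" .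
  show "(\<integral>\<omega>. \<bar>XR N cR \<omega> - ARf N \<omega>\<bar> \<partial>M' N) \<le> sqrt (real N) * ((2 + 2 / (1 - cR)) * Tl ?L)"
    unfolding e1 by (rule mult_left_mono[OF e2]) simp
qed

end

context ctxR begin

lemma R_conv:
  assumes cR: "0 \<le> cR" "cR < 1"
  shows "weak_conv_m (\<lambda>N. distr (M' N) borel (XR N cR)) (normal_law 0 sig2)"
proof (rule weak_conv_from_char)
  have s0: "0 \<le> sig2" unfolding sig2_def
    using var_le_sq(2)[OF P D0_int D0_sq] summable_vc vv_nn c_pos
    by (intro add_nonneg_nonneg suminf_nonneg) (auto intro: divide_nonneg_pos)
  show "real_distribution (normal_law 0 sig2)" by (rule real_distribution_normal_law[OF s0])
  show "real_distribution (distr (M' N) borel (XR N cR))" if N1: "1 \<le> N" for N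
  proof -
    interpret MN: prob_space "M' N" by (rule M'_prob[OF N1])
    show ?thesis by (rule MN.real_distribution_distr) (rule R_bound(1)[OF N1 cR])
  qed
  fix t
  define K where "K = \<bar>t\<bar> * (2 + 2 / (1 - cR))"
  have err: "(\<lambda>N. \<bar>t\<bar> * (sqrt (real N) * ((2 + 2 / (1 - cR)) * Tl (Lvl c N)))) \<longlonglongrightarrow> 0"
  proof -
    have "(\<lambda>N. sqrt (real N) * (sqrt VD * sqrt (1 / phiD) ^ Lvl c N / (1 - sqrt (1 / phiD)))) \<longlonglongrightarrow> 0"
      by (rule tail_decay[OF phiN cl(1) conjunct1[OF A2] Lvl_le Lvl_filterlim less_imp_le[OF VD]])
    then have "(\<lambda>N. K * (sqrt (real N) * Tl (Lvl c N))) \<longlonglongrightarrow> K * 0"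
      unfolding Tl_def q_def by (intro tendsto_mult tendsto_const)
    then show ?thesis by (simp add: K_def mult_ac)
  qed
  have bnd: "\<forall>\<^sub>F N in sequentially. norm (char (distr (M' N) borel (XR N cR)) t - Phi N t) \<le> \<bar>t\<bar> * (sqrt (real N) * ((2 + 2 / (1 - cR)) * Tl (Lvl c N)))"
    using eventually_ge_at_top[of 1]
  proof eventually_elim
    case (elim N)
    interpret MN: prob_space "M' N" by (rule M'_prob[OF elim])
    note RB = R_bound[OF elim cR]
    have "norm (char (distr (M' N) borel (XR N cR)) t - Phi N t) = norm (char (distr (M' N) borel (XR N cR)) t - char (distr (M' N) borel (ARf N)) t)"
      by (simp add: R_char[OF elim])
    also have "\<dots> \<le> \<bar>t\<bar> * (\<integral>\<omega>. \<bar>XR N cR \<omega> - ARf N \<omega>\<bar> \<partial>M' N)"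
      by (rule MN.char_diff_le[OF RB(1) RB(2) RB(3)])
    also have "\<dots> \<le> \<bar>t\<bar> * (sqrt (real N) * ((2 + 2 / (1 - cR)) * Tl (Lvl c N)))"
      by (rule mult_left_mono[OF RB(4)]) simp
    finally show ?case .
  qed
  have "(\<lambda>N. char (distr (M' N) borel (XR N cR)) t - Phi N t) \<longlonglongrightarrow> 0"
    by (rule Lim_null_comparison[OF bnd err])
  then have "(\<lambda>N. (char (distr (M' N) borel (XR N cR)) t - Phi N t) + Phi N t) \<longlonglongrightarrow> 0 + char (normal_law 0 sig2) t"
    by (intro tendsto_add Phi_lim)
  then show "(\<lambda>N. char (distr (M' N) borel (XR N cR)) t) \<longlonglongrightarrow> char (normal_law 0 sig2) t" by simp
qed

end

theorem theorem1:
  fixes P :: "'a measure" and D0 :: "'a \<Rightarrow> real" and D :: "nat \<Rightarrow> 'a \<Rightarrow> real"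
    and mt :: "nat \<Rightarrow> real" and mu :: real
    and c :: "nat \<Rightarrow> real" and VD phiD cl cu phiN :: real
    and cost0 :: real and cost :: "nat \<Rightarrow> real" and C' K B B0 :: real
    \<comment> \<open>family of probability spaces (one per N) realising S\<close>
    and M :: "nat \<Rightarrow> 'b measure" and X0 :: "nat \<Rightarrow> nat \<Rightarrow> 'b \<Rightarrow> real"
    and Nr :: "nat \<Rightarrow> nat \<Rightarrow> 'b \<Rightarrow> nat" and Y :: "nat \<Rightarrow> nat \<Rightarrow> nat \<Rightarrow> 'b \<Rightarrow> real"
    \<comment> \<open>family of probability spaces (one per N) realising S(c_R)\<close>
    and M' :: "nat \<Rightarrow> 'c measure" and X0' :: "nat \<Rightarrow> nat \<Rightarrow> 'c \<Rightarrow> real"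
    and Nr' :: "nat \<Rightarrow> nat \<Rightarrow> 'c \<Rightarrow> nat" and Y' :: "nat \<Rightarrow> nat \<Rightarrow> nat \<Rightarrow> 'c \<Rightarrow> real"
  assumes P: "prob_space P"
    and mt_lim: "mt \<longlonglongrightarrow> mu"
    \<comment> \<open>(A1)\<close>
    and D0_rv: "D0 \<in> borel_measurable P"
    and D0_int: "integrable P D0" and D0_sq: "integrable P (\<lambda>x. (D0 x)\<^sup>2)"
    and D0_mean: "(\<integral>x. D0 x \<partial>P) = mt 0"
    and D_rv: "\<And>l. D l \<in> borel_measurable P"
    and D_int: "\<And>l. integrable P (D l)" and D_sq: "\<And>l. integrable P (\<lambda>x. (D l x)\<^sup>2)"
    and D_mean: "\<And>l. (\<integral>x. D l x \<partial>P) = mt (Suc l) - mt l"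
    and D_mom: "\<And>l. (\<integral>x. (D l x)\<^sup>2 \<partial>P) \<le> VD * phiD powr (- real l)"
    and VD: "VD > 0" and phiD: "phiD > 2"
    \<comment> \<open>constants c_(l,l+1) and (A2)\<close>
    and c_pos: "\<And>l. c l > 0" and c_anti: "\<And>l. c (Suc l) \<le> c l" and c_lim: "c \<longlonglongrightarrow> 0"
    and A2: "\<And>l. cl * phiN powr (- real l) \<le> c l \<and> c l \<le> cu * phiN powr (- real l)"
    and cl: "0 < cl" "cl \<le> cu" and phiN: "2 < phiN" "phiN < phiD"
    \<comment> \<open>(A3) (cost bounds; irrelevant to the distributional conclusion)\<close>
    and A3: "\<And>l. cost l \<le> C' * 2 ^ l * (K + real l * B + B0)"
    \<comment> \<open>construction of S for each N \<ge> 1\<close>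
    and M_prob: "\<And>N. N \<ge> 1 \<Longrightarrow> prob_space (M N)"
    and X0_law: "\<And>N r. N \<ge> 1 \<Longrightarrow> r \<in> {1..N} \<Longrightarrow>
        X0 N r \<in> borel_measurable (M N) \<and> distr (M N) borel (X0 N r) = distr P borel D0"
    and X0_indep: "\<And>N. N \<ge> 1 \<Longrightarrow> prob_space.indep_vars (M N) (\<lambda>_. borel) (X0 N) {1..N}"
    and Nr_rv: "\<And>N l. N \<ge> 1 \<Longrightarrow> Nr N l \<in> measurable (M N) (count_space UNIV)"
    and Nr_det: "\<And>N l \<omega>. N \<ge> 1 \<Longrightarrow> l \<le> Lvl c N \<Longrightarrow> \<omega> \<in> space (M N) \<Longrightarrow>
        Nr N l \<omega> = nsamp c N l"
    and Nr_bern: "\<And>N l. N \<ge> 1 \<Longrightarrow> Lvl c N < l \<Longrightarrow>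
        distr (M N) (count_space UNIV) (Nr N l)
          = measure_pmf (map_pmf (\<lambda>b. if b then 1 else 0) (bernoulli_pmf (c l * real N)))"
    and Y_law: "\<And>N l r. N \<ge> 1 \<Longrightarrow> r \<in> {1..nsamp c N l} \<Longrightarrow>
        Y N l r \<in> borel_measurable (M N) \<and> distr (M N) borel (Y N l r) = distr P borel (D l)"
    and Y_indep: "\<And>N l. N \<ge> 1 \<Longrightarrow> l < Lvl c N \<Longrightarrow>
        prob_space.indep_vars (M N) (\<lambda>_. borel) (Y N l) {1..nsamp c N l}"
    and NY_indep: "\<And>N l. N \<ge> 1 \<Longrightarrow> Lvl c N < l \<Longrightarrow>
        prob_space.indep_var (M N) borel (Y N l 1) borel (\<lambda>\<omega>. real (Nr N l \<omega>))"
    and S_indep: "\<And>N. N \<ge> 1 \<Longrightarrow> prob_space.indep_vars (M N) (\<lambda>_. borel)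
        (\<lambda>i. case i of None \<Rightarrow> S0_est N (X0 N) | Some l \<Rightarrow> Slev (M N) (Nr N) (Y N) l) UNIV"
    \<comment> \<open>construction of S(c_R) for each N \<ge> 1\<close>
    and M'_prob: "\<And>N. N \<ge> 1 \<Longrightarrow> prob_space (M' N)"
    and X0'_law: "\<And>N r. N \<ge> 1 \<Longrightarrow> r \<in> {1..N} \<Longrightarrow>
        X0' N r \<in> borel_measurable (M' N) \<and> distr (M' N) borel (X0' N r) = distr P borel D0"
    and Nr'_rv: "\<And>N l. N \<ge> 1 \<Longrightarrow> Nr' N l \<in> measurable (M' N) (count_space UNIV)"
    and Nr'_det: "\<And>N l \<omega>. N \<ge> 1 \<Longrightarrow> l \<le> Lvl c N \<Longrightarrow> \<omega> \<in> space (M' N) \<Longrightarrow>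
        Nr' N l \<omega> = nsamp c N l"
    and Nr'_bern: "\<And>N l. N \<ge> 1 \<Longrightarrow> Lvl c N < l \<Longrightarrow>
        distr (M' N) (count_space UNIV) (Nr' N l)
          = measure_pmf (map_pmf (\<lambda>b. if b then 1 else 0) (bernoulli_pmf (c l * real N)))"
    and Y'_law: "\<And>N l r. N \<ge> 1 \<Longrightarrow> r \<in> {1..nsamp c N l} \<Longrightarrow>
        Y' N l r \<in> borel_measurable (M' N) \<and> distr (M' N) borel (Y' N l r) = distr P borel (D l)"
    and blocks_indep: "\<And>N. N \<ge> 1 \<Longrightarrow>
        prob_space.indep_sets (M' N) (blk_sets (M' N) c N (X0' N) (Nr' N) (Y' N)) (blk_index c N)"
  shows "weak_conv_m (\<lambda>N. distr (M N) borel (\<lambda>\<omega>. sqrt (real N) * (S_est (M N) N (X0 N) (Nr N) (Y N) \<omega> - mu)))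
           (normal_law 0 (Var_of P D0 + (\<Sum>l. Var_of P (D l) / c l)))
       \<and> (\<forall>cR. 0 \<le> cR \<and> cR < phiN powr (-1/2) \<longrightarrow>
           weak_conv_m (\<lambda>N. distr (M' N) borel
               (\<lambda>\<omega>. sqrt (real N) * (SR_est (M' N) c N cR (X0' N) (Nr' N) (Y' N) \<omega> - mu)))
             (normal_law 0 (Var_of P D0 + (\<Sum>l. Var_of P (D l) / c l))))"
  proof -
  interpret S: ctxS c P D0 D mt mu VD phiD cl cu phiN M X0 Nr Y
    by (intro ctxS.intro ctxD.intro cseq.intro ctxD_axioms.intro ctxS_axioms.intro; fact assms)
  interpret R: ctxR c P D0 D mt mu VD phiD cl cu phiN M' X0' Nr' Y'
    by (intro ctxR.intro ctxD.intro cseq.intro ctxD_axioms.intro ctxR_axioms.intro; fact assms)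
  have sig: "S.sig2 = Var_of P D0 + (\<Sum>l. Var_of P (D l) / c l)"
    by (simp add: S.sig2_def S.vv_def)
  have part1: "weak_conv_m (\<lambda>N. distr (M N) borel (\<lambda>\<omega>. sqrt (real N) * (S_est (M N) N (X0 N) (Nr N) (Y N) \<omega> - mu)))
           (normal_law 0 (Var_of P D0 + (\<Sum>l. Var_of P (D l) / c l)))"
    using S.S_conv unfolding sig S.XS_def[abs_def] .
  have part2: "weak_conv_m (\<lambda>N. distr (M' N) borel
               (\<lambda>\<omega>. sqrt (real N) * (SR_est (M' N) c N cR (X0' N) (Nr' N) (Y' N) \<omega> - mu)))
             (normal_law 0 (Var_of P D0 + (\<Sum>l. Var_of P (D l) / c l)))"
    if cR: "0 \<le> cR" "cR < phiN powr (-1/2)" for cR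
  proof -
    have "phiN powr (-1/2) < phiN powr 0"
      by (rule powr_less_mono) (use phiN in auto)
    then have "cR < 1" using cR phiN by simp
    show ?thesis using R.R_conv[OF cR(1) \<open>cR < 1\<close>] unfolding sig R.XR_def[abs_def] .
  qed
  show ?thesis using part1 part2 by blast
qed

end
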